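(* Let $\tau$ be an LOSR-free transformation which takes bipartite resources of one type to bipartite resources of another type, in one of the following three cases: (1) from type $\mathsf{CC}\to\mathsf{CC}$ (boxes) to type $\mathsf{II}\to\mathsf{QQ}$ (states); (2) from type $\mathsf{CC}\to\mathsf{CC}$ (boxes) to type $\mathsf{CI}\to\mathsf{CQ}$ (steering assemblages); (3) from type $\mathsf{CI}\to\mathsf{CQ}$ (steering assemblages) to type $\mathsf{II}\to\mathsf{QQ}$ (states). Then for every resource $R$ of the initial type (of any dimensions), the resource $\tau[R]$ is LOSR-free.
   Context: A system has a dimension and a type in $\{\mathsf{I},\mathsf{C},\mathsf{Q}\}$ (trivial, i.e. dimension 1; classical; quantum). A bipartite resource with Alice's input/output $\mathcal{X},\mathcal{A}$ and Bob's input/output $\mathcal{Y},\mathcal{B}$ is a completely positive linear map $R$ from operators on $\mathcal{X}\otimes\mathcal{Y}$ to operators on $\mathcal{A}\otimes\mathcal{B}$ with $\mathrm{tr}R[\xi\otimes\psi]=1$ for all density matrices $\xi,\psi$, nonsignaling in both directions ($\mathrm{tr}_{\mathcal{A}}R[\xi\otimes\psi]$ independent of $\xi$, $\mathrm{tr}_{\mathcal{B}}R[\xi\otimes\psi]$ independent of $\psi$), and satisfying classicality constraints: for a classical output $\mathcal{A}$, $\langle i|R[\xi\otimes\psi]|j\rangle_{\mathcal{A}}=0$ for $i\neq j$; for a classical input $\mathcal{X}$, $R[|i\rangle\langle j|\otimes\psi]=0$ for $i\ne j$ (analogously for Bob). Its type is $\mathsf{T}[\mathcal{X}]\mathsf{T}[\mathcal{Y}]\to\mathsf{T}[\mathcal{A}]\mathsf{T}[\mathcal{B}]$.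 A resource is LOSR-free if it equals $\sum_i p_i R^i_{\mathcal{A}|\mathcal{X}}\otimes R^i_{\mathcal{B}|\mathcal{Y}}$ for a probability distribution $(p_i)$ and single-party channels (CPTP maps respecting the classicality of their input/output). An LOSR-free transformation from resources with systems $\mathcal{X}\mathcal{Y}\to\mathcal{A}\mathcal{B}$ to resources with systems $\mathcal{X}'\mathcal{Y}'\to\mathcal{A}'\mathcal{B}'$ is a map of the form $\tau[R]=\sum_\lambda p_\lambda\,(\mathcal{E}^\lambda_{\mathcal{A}}\otimes\mathcal{E}^\lambda_{\mathcal{B}})\circ(R\otimes\mathrm{id}_{\mathcal{M}_A\mathcal{M}_B})\circ(\mathcal{P}^\lambda_{\mathcal{A}}\otimes\mathcal{P}^\lambda_{\mathcal{B}})$, i.e. a convex mixture of products of local supermaps, where $\mathcal{P}^\lambda_{\mathcal{A}}$ is a channel from $\mathcal{X}'$ to $\mathcal{X}\otimes\mathcal{M}_A$, $\mathcal{E}^\lambda_{\mathcal{A}}$ is a channel from $\mathcal{A}\otimes\mathcal{M}_A$ to $\mathcal{A}'$ (with local memory $\mathcal{M}_A$), similarly for Bob, such that $\tau$ maps resources of the initial type to resources of the target type. *)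

theory Defs
  imports Complex_Main
begin

text \<open>System types: trivial, classical, quantum.\<close>
datatype systype = TI | TC | TQ

definition valid_sys :: "nat \<Rightarrow> systype \<Rightarrow> bool" where
  "valid_sys d t \<longleftrightarrow> d \<ge> 1 \<and> (t = TI \<longrightarrow> d = 1)"

text \<open>Operators on the space spanned by the basis indexed by a finite set S are
  represented by their matrix entries (only entries indexed by S matter).
  A linear map from operators on S to operators on T is represented by its
  coefficients K i i' j j' = entry (j,j') of the image of |i><i'|.\<close>
type_synonym 'i op = "'i \<Rightarrow> 'i \<Rightarrow> complex"
type_synonym ('i,'j) kern = "'i \<Rightarrow> 'i \<Rightarrow> 'j \<Rightarrow> 'j \<Rightarrow> complex"

definition kapply :: "('i,'j) kern \<Rightarrow> 'i set \<Rightarrow> 'i op \<Rightarrow> 'j op" where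
  "kapply K S \<rho> = (\<lambda>j j'. \<Sum>i\<in>S. \<Sum>i'\<in>S. K i i' j j' * \<rho> i i')"

definition ktensor :: "('i,'j) kern \<Rightarrow> ('k,'l) kern \<Rightarrow> ('i \<times> 'k, 'j \<times> 'l) kern" where
  "ktensor K L = (\<lambda>(x,y) (x',y') (a,b) (a',b'). K x x' a a' * L y y' b b')"

definition kid :: "('i,'i) kern" where
  "kid = (\<lambda>i i' j j'. if i = j \<and> i' = j' then 1 else 0)"

definition kcomp :: "('i,'j) kern \<Rightarrow> 'j set \<Rightarrow> ('j,'k) kern \<Rightarrow> ('i,'k) kern" where
  "kcomp K1 S2 K2 = (\<lambda>i i' k k'. \<Sum>j\<in>S2. \<Sum>j'\<in>S2. K1 i i' j j' * K2 j j' k k')"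

definition kperm :: "('i \<Rightarrow> 'j) \<Rightarrow> ('i,'j) kern" where
  "kperm \<sigma> = (\<lambda>i i' j j'. if j = \<sigma> i \<and> j' = \<sigma> i' then 1 else 0)"

definition optensor :: "'i op \<Rightarrow> 'k op \<Rightarrow> ('i \<times> 'k) op" where
  "optensor \<xi> \<psi> = (\<lambda>(x,y) (x',y'). \<xi> x x' * \<psi> y y')"

definition ketbra :: "'i \<Rightarrow> 'i \<Rightarrow> 'i op" where
  "ketbra i j = (\<lambda>u v. if u = i \<and> v = j then 1 else 0)"

definition trace :: "'i set \<Rightarrow> 'i op \<Rightarrow> complex" where
  "trace S \<rho> = (\<Sum>i\<in>S. \<rho> i i)"

definition nonneg :: "complex \<Rightarrow> bool" where
  "nonneg z \<longleftrightarrow> Im z = 0 \<and> Re z \<ge> 0"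

definition psd :: "'i set \<Rightarrow> 'i op \<Rightarrow> bool" where
  "psd S \<rho> \<longleftrightarrow> (\<forall>v. nonneg (\<Sum>i\<in>S. \<Sum>i'\<in>S. cnj (v i) * \<rho> i i' * v i'))"

definition density :: "'i set \<Rightarrow> 'i op \<Rightarrow> bool" where
  "density S \<rho> \<longleftrightarrow> psd S \<rho> \<and> trace S \<rho> = 1"

definition op_eq_on :: "'i set \<Rightarrow> 'i op \<Rightarrow> 'i op \<Rightarrow> bool" where
  "op_eq_on S \<rho> \<sigma> \<longleftrightarrow> (\<forall>i\<in>S. \<forall>i'\<in>S. \<rho> i i' = \<sigma> i i')"

definition keq :: "'i set \<Rightarrow> 'j set \<Rightarrow> ('i,'j) kern \<Rightarrow> ('i,'j) kern \<Rightarrow> bool" where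
  "keq S T K L \<longleftrightarrow> (\<forall>i\<in>S. \<forall>i'\<in>S. \<forall>j\<in>T. \<forall>j'\<in>T. K i i' j j' = L i i' j j')"

definition is_CP :: "'i set \<Rightarrow> 'j set \<Rightarrow> ('i,'j) kern \<Rightarrow> bool" where
  "is_CP S T K \<longleftrightarrow> (\<forall>k::nat. \<forall>\<rho>. psd (S \<times> {..<k}) \<rho> \<longrightarrow>
      psd (T \<times> {..<k}) (kapply (ktensor K kid) (S \<times> {..<k}) \<rho>))"

definition is_CPTP :: "'i set \<Rightarrow> 'j set \<Rightarrow> ('i,'j) kern \<Rightarrow> bool" where
  "is_CPTP S T K \<longleftrightarrow> is_CP S T K \<and> (\<forall>\<rho>. trace T (kapply K S \<rho>) = trace S \<rho>)"

text \<open>Single-party channel respecting the classicality of input and output.\<close>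
definition channel :: "nat \<Rightarrow> systype \<Rightarrow> nat \<Rightarrow> systype \<Rightarrow> (nat,nat) kern \<Rightarrow> bool" where
  "channel dX tX dA tA K \<longleftrightarrow>
     valid_sys dX tX \<and> valid_sys dA tA \<and> is_CPTP {..<dX} {..<dA} K \<and>
     (tA = TC \<longrightarrow> (\<forall>\<rho>. density {..<dX} \<rho> \<longrightarrow>
        (\<forall>a\<in>{..<dA}. \<forall>a'\<in>{..<dA}. a \<noteq> a' \<longrightarrow> kapply K {..<dX} \<rho> a a' = 0))) \<and>
     (tX = TC \<longrightarrow> (\<forall>i\<in>{..<dX}. \<forall>j\<in>{..<dX}. i \<noteq> j \<longrightarrow>
        op_eq_on {..<dA} (kapply K {..<dX} (ketbra i j)) (\<lambda>_ _. 0)))"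

definition is_resource ::
  "nat \<Rightarrow> systype \<Rightarrow> nat \<Rightarrow> systype \<Rightarrow> nat \<Rightarrow> systype \<Rightarrow> nat \<Rightarrow> systype \<Rightarrow>
   (nat \<times> nat, nat \<times> nat) kern \<Rightarrow> bool" where
  "is_resource dX tX dY tY dA tA dB tB R \<longleftrightarrow>
     (let X = {..<dX}; Y = {..<dY}; A = {..<dA}; B = {..<dB};
          out = (\<lambda>\<rho>. kapply R (X \<times> Y) \<rho>) in
     valid_sys dX tX \<and> valid_sys dY tY \<and> valid_sys dA tA \<and> valid_sys dB tB \<and>
     is_CP (X \<times> Y) (A \<times> B) R \<and>
     (\<forall>\<xi> \<psi>. density X \<xi> \<longrightarrow> density Y \<psi> \<longrightarrow> trace (A \<times> B) (out (optensor \<xi> \<psi>)) = 1) \<and>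
     (\<forall>\<xi> \<xi>' \<psi>. density X \<xi> \<longrightarrow> density X \<xi>' \<longrightarrow> density Y \<psi> \<longrightarrow>
        op_eq_on B (\<lambda>b b'. \<Sum>a\<in>A. out (optensor \<xi> \<psi>) (a,b) (a,b'))
                    (\<lambda>b b'. \<Sum>a\<in>A. out (optensor \<xi>' \<psi>) (a,b) (a,b'))) \<and>
     (\<forall>\<xi> \<psi> \<psi>'. density X \<xi> \<longrightarrow> density Y \<psi> \<longrightarrow> density Y \<psi>' \<longrightarrow>
        op_eq_on A (\<lambda>a a'. \<Sum>b\<in>B. out (optensor \<xi> \<psi>) (a,b) (a',b))
                    (\<lambda>a a'. \<Sum>b\<in>B. out (optensor \<xi> \<psi>') (a,b) (a',b))) \<and>
     (tA = TC \<longrightarrow> (\<forall>\<xi> \<psi>. density X \<xi> \<longrightarrow> density Y \<psi> \<longrightarrow>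
        (\<forall>a\<in>A. \<forall>a'\<in>A. \<forall>b\<in>B. \<forall>b'\<in>B. a \<noteq> a' \<longrightarrow> out (optensor \<xi> \<psi>) (a,b) (a',b') = 0))) \<and>
     (tB = TC \<longrightarrow> (\<forall>\<xi> \<psi>. density X \<xi> \<longrightarrow> density Y \<psi> \<longrightarrow>
        (\<forall>a\<in>A. \<forall>a'\<in>A. \<forall>b\<in>B. \<forall>b'\<in>B. b \<noteq> b' \<longrightarrow> out (optensor \<xi> \<psi>) (a,b) (a',b') = 0))) \<and>
     (tX = TC \<longrightarrow> (\<forall>i\<in>X. \<forall>j\<in>X. \<forall>\<psi>. i \<noteq> j \<longrightarrow> density Y \<psi> \<longrightarrow>
        op_eq_on (A \<times> B) (out (optensor (ketbra i j) \<psi>)) (\<lambda>_ _. 0))) \<and>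
     (tY = TC \<longrightarrow> (\<forall>i\<in>Y. \<forall>j\<in>Y. \<forall>\<xi>. i \<noteq> j \<longrightarrow> density X \<xi> \<longrightarrow>
        op_eq_on (A \<times> B) (out (optensor \<xi> (ketbra i j))) (\<lambda>_ _. 0))))"

definition LOSR_free ::
  "nat \<Rightarrow> systype \<Rightarrow> nat \<Rightarrow> systype \<Rightarrow> nat \<Rightarrow> systype \<Rightarrow> nat \<Rightarrow> systype \<Rightarrow>
   (nat \<times> nat, nat \<times> nat) kern \<Rightarrow> bool" where
  "LOSR_free dX tX dY tY dA tA dB tB R \<longleftrightarrow>
     is_resource dX tX dY tY dA tA dB tB R \<and>
     (\<exists>(I::nat set) (p::nat \<Rightarrow> real) RA RB. finite I \<and> (\<forall>i\<in>I. p i \<ge> 0) \<and> (\<Sum>i\<in>I. p i) = 1 \<and>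
        (\<forall>i\<in>I. channel dX tX dA tA (RA i) \<and> channel dY tY dB tB (RB i)) \<and>
        keq ({..<dX} \<times> {..<dY}) ({..<dA} \<times> {..<dB}) R
            (\<lambda>u u' v v'. \<Sum>i\<in>I. complex_of_real (p i) * ktensor (RA i) (RB i) u u' v v'))"

text \<open>One branch (fixed \<lambda>) of an LOSR supermap:
  (E_A \<otimes> E_B) \<circ> (R \<otimes> id_{M_A M_B}) \<circ> (P_A \<otimes> P_B), with memories of dimensions mA, mB.\<close>
definition supermap_branch ::
  "nat \<Rightarrow> nat \<Rightarrow> nat \<Rightarrow> nat \<Rightarrow> nat \<Rightarrow> nat \<Rightarrow>
   (nat, nat \<times> nat) kern \<Rightarrow> (nat, nat \<times> nat) kern \<Rightarrow>
   (nat \<times> nat, nat) kern \<Rightarrow> (nat \<times> nat, nat) kern \<Rightarrow>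
   (nat \<times> nat, nat \<times> nat) kern \<Rightarrow> (nat \<times> nat, nat \<times> nat) kern" where
  "supermap_branch dX dY dA dB mA mB PA PB EA EB R =
     (let X = {..<dX}; Y = {..<dY}; A = {..<dA}; B = {..<dB}; MA = {..<mA}; MB = {..<mB} in
      kcomp
       (kcomp
         (kcomp
           (kcomp (ktensor PA PB) ((X \<times> MA) \<times> (Y \<times> MB))
                  (kperm (\<lambda>((x,m),(y,n)). ((x,y),(m,n)))))
           ((X \<times> Y) \<times> (MA \<times> MB)) (ktensor R kid))
         ((A \<times> B) \<times> (MA \<times> MB)) (kperm (\<lambda>((a,b),(m,n)). ((a,m),(b,n)))))
       ((A \<times> MA) \<times> (B \<times> MB)) (ktensor EA EB))"

definition supermap ::
  "nat \<Rightarrow> nat \<Rightarrow> nat \<Rightarrow> nat \<Rightarrow> nat set \<Rightarrow> (nat \<Rightarrow> real) \<Rightarrow> (nat \<Rightarrow> nat) \<Rightarrow> (nat \<Rightarrow> nat) \<Rightarrow>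
   (nat \<Rightarrow> (nat, nat \<times> nat) kern) \<Rightarrow> (nat \<Rightarrow> (nat, nat \<times> nat) kern) \<Rightarrow>
   (nat \<Rightarrow> (nat \<times> nat, nat) kern) \<Rightarrow> (nat \<Rightarrow> (nat \<times> nat, nat) kern) \<Rightarrow>
   (nat \<times> nat, nat \<times> nat) kern \<Rightarrow> (nat \<times> nat, nat \<times> nat) kern" where
  "supermap dX dY dA dB \<Lambda> p mA mB PA PB EA EB R =
     (\<lambda>u u' v v'. \<Sum>l\<in>\<Lambda>. complex_of_real (p l) *
        supermap_branch dX dY dA dB (mA l) (mB l) (PA l) (PB l) (EA l) (EB l) R u u' v v')"

definition LOSR_free_transformation ::
  "nat \<Rightarrow> systype \<Rightarrow> nat \<Rightarrow> systype \<Rightarrow> nat \<Rightarrow> systype \<Rightarrow> nat \<Rightarrow> systype \<Rightarrow>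
   nat \<Rightarrow> systype \<Rightarrow> nat \<Rightarrow> systype \<Rightarrow> nat \<Rightarrow> systype \<Rightarrow> nat \<Rightarrow> systype \<Rightarrow>
   nat set \<Rightarrow> (nat \<Rightarrow> real) \<Rightarrow> (nat \<Rightarrow> nat) \<Rightarrow> (nat \<Rightarrow> nat) \<Rightarrow>
   (nat \<Rightarrow> (nat, nat \<times> nat) kern) \<Rightarrow> (nat \<Rightarrow> (nat, nat \<times> nat) kern) \<Rightarrow>
   (nat \<Rightarrow> (nat \<times> nat, nat) kern) \<Rightarrow> (nat \<Rightarrow> (nat \<times> nat, nat) kern) \<Rightarrow> bool" where
  "LOSR_free_transformation dX tX dY tY dA tA dB tB dX' tX' dY' tY' dA' tA' dB' tB'
       \<Lambda> p mA mB PA PB EA EB \<longleftrightarrow>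
     finite \<Lambda> \<and> (\<forall>l\<in>\<Lambda>. p l \<ge> 0) \<and> (\<Sum>l\<in>\<Lambda>. p l) = 1 \<and>
     (\<forall>l\<in>\<Lambda>. mA l \<ge> 1 \<and> mB l \<ge> 1 \<and>
        is_CPTP {..<dX'} ({..<dX} \<times> {..<mA l}) (PA l) \<and>
        is_CPTP {..<dY'} ({..<dY} \<times> {..<mB l}) (PB l) \<and>
        is_CPTP ({..<dA} \<times> {..<mA l}) {..<dA'} (EA l) \<and>
        is_CPTP ({..<dB} \<times> {..<mB l}) {..<dB'} (EB l)) \<and>
     (\<forall>R. is_resource dX tX dY tY dA tA dB tB R \<longrightarrow>
        is_resource dX' tX' dY' tY' dA' tA' dB' tB'
          (supermap dX dY dA dB \<Lambda> p mA mB PA PB EA EB R))"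

end

theory Submission
  imports Defs "HOL-Library.Countable"
begin

lemma qf_restrict:
  assumes "finite S" "T \<subseteq> S" "\<And>i. i \<notin> T \<Longrightarrow> v i = 0"
  shows "(\<Sum>i\<in>S. \<Sum>i'\<in>S. cnj (v i) * \<rho> i i' * v i') = (\<Sum>i\<in>T. \<Sum>i'\<in>T. cnj (v i) * \<rho> i i' * v i')"
proof -
  have "(\<Sum>i\<in>S. \<Sum>i'\<in>S. cnj (v i) * \<rho> i i' * v i') = (\<Sum>i\<in>T. \<Sum>i'\<in>S. cnj (v i) * \<rho> i i' * v i')"
    by (rule sum.mono_neutral_right) (use assms in auto)
  also have "\<dots> = (\<Sum>i\<in>T. \<Sum>i'\<in>T. cnj (v i) * \<rho> i i' * v i')"
    by (rule sum.cong[OF refl], rule sum.mono_neutral_right) (use assms in auto)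
  finally show ?thesis .
qed

lemma psd_restrict:
  assumes "finite S" "T \<subseteq> S" "psd S \<rho>"
  shows "psd T \<rho>"
  unfolding psd_def
proof
  fix v
  let ?w = "\<lambda>i. if i \<in> T then v i else (0::complex)"
  have "nonneg (\<Sum>i\<in>S. \<Sum>i'\<in>S. cnj (?w i) * \<rho> i i' * ?w i')" using spec[OF assms(3)[unfolded psd_def], of ?w] .
  also have "(\<Sum>i\<in>S. \<Sum>i'\<in>S. cnj (?w i) * \<rho> i i' * ?w i') = (\<Sum>i\<in>T. \<Sum>i'\<in>T. cnj (?w i) * \<rho> i i' * ?w i')"
    by (rule qf_restrict) (use assms in auto)
  also have "\<dots> = (\<Sum>i\<in>T. \<Sum>i'\<in>T. cnj (v i) * \<rho> i i' * v i')" by simp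
  finally show "nonneg (\<Sum>i\<in>T. \<Sum>i'\<in>T. cnj (v i) * \<rho> i i' * v i')" .
qed

lemma qf_two:
  assumes "finite S" "i \<in> S" "j \<in> S" "i \<noteq> j"
  shows "(\<Sum>s\<in>S. \<Sum>s'\<in>S. cnj ((\<lambda>s. if s = i then \<alpha> else if s = j then \<beta> else 0) s) * \<rho> s s' *
            (\<lambda>s. if s = i then \<alpha> else if s = j then \<beta> else 0) s') =
         cnj \<alpha> * \<rho> i i * \<alpha> + cnj \<alpha> * \<rho> i j * \<beta> + cnj \<beta> * \<rho> j i * \<alpha> + cnj \<beta> * \<rho> j j * \<beta>"
proof -
  have "(\<Sum>s\<in>S. \<Sum>s'\<in>S. cnj ((\<lambda>s. if s = i then \<alpha> else if s = j then \<beta> else 0) s) * \<rho> s s' *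
            (\<lambda>s. if s = i then \<alpha> else if s = j then \<beta> else 0) s') =
        (\<Sum>s\<in>{i,j}. \<Sum>s'\<in>{i,j}. cnj ((\<lambda>s. if s = i then \<alpha> else if s = j then \<beta> else 0) s) * \<rho> s s' *
            (\<lambda>s. if s = i then \<alpha> else if s = j then \<beta> else 0) s')"
    by (rule qf_restrict) (use assms in auto)
  also have "\<dots> = cnj \<alpha> * \<rho> i i * \<alpha> + cnj \<alpha> * \<rho> i j * \<beta> + cnj \<beta> * \<rho> j i * \<alpha> + cnj \<beta> * \<rho> j j * \<beta>"
  proof -
    have s2: "\<And>g :: 'a \<Rightarrow> complex. (\<Sum>s\<in>{i,j}. g s) = g i + g j" using assms(4) by simp
    show ?thesis unfolding s2 using assms(4) by simp
  qed
  finally show ?thesis .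
qed

lemma qf_one:
  assumes "finite S" "i \<in> S"
  shows "(\<Sum>s\<in>S. \<Sum>s'\<in>S. cnj ((\<lambda>s. if s = i then \<alpha> else 0) s) * \<rho> s s' *
            (\<lambda>s. if s = i then \<alpha> else 0) s') = cnj \<alpha> * \<rho> i i * \<alpha>"
proof -
  have "(\<Sum>s\<in>S. \<Sum>s'\<in>S. cnj ((\<lambda>s. if s = i then \<alpha> else 0) s) * \<rho> s s' *
            (\<lambda>s. if s = i then \<alpha> else 0) s') =
        (\<Sum>s\<in>{i}. \<Sum>s'\<in>{i}. cnj ((\<lambda>s. if s = i then \<alpha> else 0) s) * \<rho> s s' *
            (\<lambda>s. if s = i then \<alpha> else 0) s')"
    by (rule qf_restrict) (use assms in auto)
  then show ?thesis by simp
qed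

lemma psd_diag:
  assumes "finite S" "psd S \<rho>" "i \<in> S"
  shows "nonneg (\<rho> i i)"
proof -
  have "nonneg (\<Sum>s\<in>S. \<Sum>s'\<in>S. cnj ((\<lambda>s. if s = i then 1 else 0) s) * \<rho> s s' *
            (\<lambda>s. if s = i then 1 else 0) s')" using spec[OF assms(2)[unfolded psd_def]] .
  then show ?thesis using qf_one[OF assms(1,3), of 1 \<rho>] by simp
qed

lemma psd_two:
  assumes "finite S" "psd S \<rho>" "i \<in> S" "j \<in> S" "i \<noteq> j"
  shows "nonneg (cnj \<alpha> * \<rho> i i * \<alpha> + cnj \<alpha> * \<rho> i j * \<beta> + cnj \<beta> * \<rho> j i * \<alpha> + cnj \<beta> * \<rho> j j * \<beta>)"
proof -
  define v where "v = (\<lambda>s. if s = i then \<alpha> else if s = j then \<beta> else 0)"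
  have "nonneg (\<Sum>s\<in>S. \<Sum>s'\<in>S. cnj (v s) * \<rho> s s' * v s')"
    using spec[OF assms(2)[unfolded psd_def], of v] .
  moreover have "(\<Sum>s\<in>S. \<Sum>s'\<in>S. cnj (v s) * \<rho> s s' * v s') = cnj \<alpha> * \<rho> i i * \<alpha> + cnj \<alpha> * \<rho> i j * \<beta> + cnj \<beta> * \<rho> j i * \<alpha> + cnj \<beta> * \<rho> j j * \<beta>"
    unfolding v_def by (rule qf_two[OF assms(1,3,4,5)])
  ultimately show ?thesis by simp
qed

lemma psd_herm:
  assumes "finite S" "psd S \<rho>" "i \<in> S" "j \<in> S"
  shows "\<rho> i j = cnj (\<rho> j i)"
proof (cases "i = j")
  case True
  have "nonneg (\<rho> i i)" using psd_diag[OF assms(1,2,3)] .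
  then show ?thesis using True unfolding nonneg_def by (simp add: complex_eq_iff)
next
  case False
  have a: "nonneg (\<rho> i i)" "nonneg (\<rho> j j)" using psd_diag[OF assms(1,2,3)] psd_diag[OF assms(1,2,4)] by auto
  have "nonneg (cnj 1 * \<rho> i i * 1 + cnj 1 * \<rho> i j * 1 + cnj 1 * \<rho> j i * 1 + cnj 1 * \<rho> j j * 1)"
    by (rule psd_two[OF assms(1-4) False])
  then have 1: "Im (\<rho> i j) + Im (\<rho> j i) = 0" using a unfolding nonneg_def by simp
  have "nonneg (cnj 1 * \<rho> i i * 1 + cnj 1 * \<rho> i j * \<i> + cnj \<i> * \<rho> j i * 1 + cnj \<i> * \<rho> j j * \<i>)"
    by (rule psd_two[OF assms(1-4) False])
  then have 2: "Re (\<rho> i j) - Re (\<rho> j i) = 0" using a unfolding nonneg_def by simp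
  show ?thesis using 1 2 by (simp add: complex_eq_iff)
qed

definition qf :: "'i set \<Rightarrow> 'i op \<Rightarrow> ('i \<Rightarrow> complex) \<Rightarrow> complex" where
  "qf S \<rho> v = (\<Sum>i\<in>S. \<Sum>i'\<in>S. cnj (v i) * \<rho> i i' * v i')"

lemma psd_qf: "psd S \<rho> \<longleftrightarrow> (\<forall>v. nonneg (qf S \<rho> v))"
  unfolding psd_def qf_def ..

lemma nonneg_add: "nonneg a \<Longrightarrow> nonneg b \<Longrightarrow> nonneg (a + b)"
  unfolding nonneg_def by simp

lemma nonneg_mult: "nonneg a \<Longrightarrow> nonneg b \<Longrightarrow> nonneg (a * b)"
  unfolding nonneg_def by simp

lemma nonneg_sum: "(\<And>i. i \<in> I \<Longrightarrow> nonneg (f i)) \<Longrightarrow> nonneg (sum f I)"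
proof (induction I rule: infinite_finite_induct)
  case (infinite A)
  then show ?case by (simp add: nonneg_def)
next
  case empty
  then show ?case by (simp add: nonneg_def)
next
  case (insert x F)
  then show ?case by (simp add: nonneg_add)
qed

lemma nonneg_cnj_mult: "nonneg (cnj a * a)"
  unfolding nonneg_def by simp

lemma lin_nonneg_zero:
  fixes a b :: real
  assumes "\<And>s. 0 \<le> a * s + b"
  shows "a = 0"
proof (rule ccontr)
  assume "a \<noteq> 0"
  have "0 \<le> a * (- (\<bar>b\<bar> + 1) / a) + b" by (rule assms)
  also have "a * (- (\<bar>b\<bar> + 1) / a) + b = - (\<bar>b\<bar> + 1) + b" using \<open>a \<noteq> 0\<close> by simp
  finally show False by linarith
qed

lemma psd_zero_diag:
  assumes "finite S" "psd S \<rho>" "i \<in> S" "j \<in> S" "\<rho> i i = 0"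
  shows "\<rho> i j = 0"
proof (cases "i = j")
  case True
  then show ?thesis using assms by simp
next
  case False
  have h: "\<rho> j i = cnj (\<rho> i j)" using psd_herm[OF assms(1,2,4,3)] .
  have "\<And>s::real. 0 \<le> (2 * Re (\<rho> i j)) * s + Re (\<rho> j j)"
  proof -
    fix s :: real
    have "nonneg (cnj (complex_of_real s) * \<rho> i i * complex_of_real s + cnj (complex_of_real s) * \<rho> i j * 1 + cnj 1 * \<rho> j i * complex_of_real s + cnj 1 * \<rho> j j * 1)"
      by (rule psd_two[OF assms(1-4) False])
    then show "0 \<le> (2 * Re (\<rho> i j)) * s + Re (\<rho> j j)" using assms(5) h unfolding nonneg_def by (simp add: algebra_simps)
  qed
  then have 1: "Re (\<rho> i j) = 0" using lin_nonneg_zero by fastforce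
  have "\<And>s::real. 0 \<le> (2 * Im (\<rho> i j)) * s + Re (\<rho> j j)"
  proof -
    fix s :: real
    have "nonneg (cnj (\<i> * complex_of_real s) * \<rho> i i * (\<i> * complex_of_real s) + cnj (\<i> * complex_of_real s) * \<rho> i j * 1 + cnj 1 * \<rho> j i * (\<i> * complex_of_real s) + cnj 1 * \<rho> j j * 1)"
      by (rule psd_two[OF assms(1-4) False])
    then show "0 \<le> (2 * Im (\<rho> i j)) * s + Re (\<rho> j j)" using assms(5) h unfolding nonneg_def by (simp add: algebra_simps)
  qed
  then have 2: "Im (\<rho> i j) = 0" using lin_nonneg_zero by fastforce
  show ?thesis using 1 2 by (simp add: complex_eq_iff)
qed

lemma sum_ind:
  fixes g :: "'a \<Rightarrow> 'b::comm_ring_1"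
  assumes "finite T" "t0 \<in> T"
  shows "(\<Sum>t\<in>T. (if t = t0 then 1 else 0) * g t) = g t0"
proof -
  have "(\<Sum>t\<in>T. (if t = t0 then 1 else 0) * g t) = (\<Sum>t\<in>T. if t = t0 then g t else 0)"
    by (rule sum.cong) auto
  also have "\<dots> = g t0" using assms by (simp add: sum.delta)
  finally show ?thesis .
qed

lemma qf_add_delta:
  assumes "finite T" "t0 \<in> T"
  shows "qf T \<rho> (\<lambda>t. v t + \<gamma> * (if t = t0 then 1 else 0)) = qf T \<rho> v + \<gamma> * (\<Sum>t\<in>T. cnj (v t) * \<rho> t t0)
     + cnj \<gamma> * (\<Sum>t'\<in>T. \<rho> t0 t' * v t') + cnj \<gamma> * \<gamma> * \<rho> t0 t0"
proof -
  let ?d = "\<lambda>t. (if t = t0 then 1 else 0) :: complex"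
  have pw: "\<And>t t'. cnj (v t + \<gamma> * ?d t) * \<rho> t t' * (v t' + \<gamma> * ?d t') =
     cnj (v t) * \<rho> t t' * v t' + \<gamma> * (?d t' * (cnj (v t) * \<rho> t t')) + cnj \<gamma> * (?d t * (\<rho> t t' * v t'))
     + cnj \<gamma> * \<gamma> * (?d t * (?d t' * \<rho> t t'))"
    by (simp add: algebra_simps)
  have "qf T \<rho> (\<lambda>t. v t + \<gamma> * ?d t) = (\<Sum>t\<in>T. \<Sum>t'\<in>T. cnj (v t) * \<rho> t t' * v t' + \<gamma> * (?d t' * (cnj (v t) * \<rho> t t')) + cnj \<gamma> * (?d t * (\<rho> t t' * v t'))
     + cnj \<gamma> * \<gamma> * (?d t * (?d t' * \<rho> t t')))"
    unfolding qf_def pw ..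
  also have "\<dots> = qf T \<rho> v + \<gamma> * (\<Sum>t\<in>T. \<Sum>t'\<in>T. ?d t' * (cnj (v t) * \<rho> t t')) + cnj \<gamma> * (\<Sum>t\<in>T. \<Sum>t'\<in>T. ?d t * (\<rho> t t' * v t'))
     + cnj \<gamma> * \<gamma> * (\<Sum>t\<in>T. \<Sum>t'\<in>T. ?d t * (?d t' * \<rho> t t'))"
    unfolding qf_def sum.distrib sum_distrib_left ..
  also have "(\<Sum>t\<in>T. \<Sum>t'\<in>T. ?d t' * (cnj (v t) * \<rho> t t')) = (\<Sum>t\<in>T. cnj (v t) * \<rho> t t0)"
    by (rule sum.cong[OF refl], rule sum_ind[OF assms])
  also have "(\<Sum>t\<in>T. \<Sum>t'\<in>T. ?d t * (\<rho> t t' * v t')) = (\<Sum>t'\<in>T. \<rho> t0 t' * v t')"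
    unfolding sum_distrib_left[symmetric] by (rule sum_ind[OF assms])
  also have "(\<Sum>t\<in>T. \<Sum>t'\<in>T. ?d t * (?d t' * \<rho> t t')) = \<rho> t0 t0"
    unfolding sum_distrib_left[symmetric] sum_ind[OF assms, of "\<lambda>t. \<Sum>t'\<in>T. ?d t' * \<rho> t t'"] by (rule sum_ind[OF assms])
  finally show ?thesis .
qed

lemma psd_schur:
  assumes "finite T" "psd T \<rho>" "t0 \<in> T" "\<rho> t0 t0 \<noteq> 0"
  shows "psd T (\<lambda>t t'. \<rho> t t' - \<rho> t t0 * \<rho> t0 t' / \<rho> t0 t0)"
  unfolding psd_qf
proof
  fix v
  let ?c = "\<rho> t0 t0"
  define \<beta> where "\<beta> = (\<Sum>t'\<in>T. \<rho> t0 t' * v t')"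
  have cr: "cnj ?c = ?c" using psd_herm[OF assms(1,2,3,3)] by simp
  have cb: "(\<Sum>t\<in>T. cnj (v t) * \<rho> t t0) = cnj \<beta>"
    unfolding \<beta>_def cnj_sum
    by (rule sum.cong[OF refl]) (simp add: psd_herm[OF assms(1,2) _ assms(3)] mult.commute)
  have "qf T (\<lambda>t t'. \<rho> t t' - \<rho> t t0 * \<rho> t0 t' / ?c) v =
        (\<Sum>t\<in>T. \<Sum>t'\<in>T. cnj (v t) * \<rho> t t' * v t' - (cnj (v t) * \<rho> t t0) * (\<rho> t0 t' * v t') / ?c)"
    unfolding qf_def by (rule sum.cong[OF refl], rule sum.cong[OF refl]) (simp add: algebra_simps)
  also have "\<dots> = qf T \<rho> v - (\<Sum>t\<in>T. cnj (v t) * \<rho> t t0) * \<beta> / ?c"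
    unfolding qf_def \<beta>_def sum_subtractf sum_divide_distrib sum_product ..
  also have "\<dots> = qf T \<rho> (\<lambda>t. v t + (- \<beta> / ?c) * (if t = t0 then 1 else 0))"
    unfolding qf_add_delta[OF assms(1,3)] cb using assms(4) cr
    by (simp add: field_simps \<beta>_def)
  finally show "nonneg (qf T (\<lambda>t t'. \<rho> t t' - \<rho> t t0 * \<rho> t0 t' / ?c) v)"
    using assms(2) unfolding psd_qf by simp
qed

lemma sum_insert_zero_row:
  fixes f :: "'a \<Rightarrow> 'a \<Rightarrow> 'b::comm_monoid_add"
  assumes "finite F" "t0 \<notin> F" "\<And>t. t \<in> insert t0 F \<Longrightarrow> f t0 t = 0 \<and> f t t0 = 0"
  shows "(\<Sum>t\<in>insert t0 F. \<Sum>t'\<in>insert t0 F. f t t') = (\<Sum>t\<in>F. \<Sum>t'\<in>F. f t t')"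
proof -
  have "(\<Sum>t\<in>insert t0 F. \<Sum>t'\<in>insert t0 F. f t t') = (\<Sum>t\<in>insert t0 F. \<Sum>t'\<in>F. f t t')"
    by (rule sum.cong[OF refl]) (simp add: sum.insert assms)
  also have "\<dots> = (\<Sum>t\<in>F. \<Sum>t'\<in>F. f t t')"
    using assms by (simp add: sum.insert)
  finally show ?thesis .
qed

lemma frob:
  assumes "finite T" "psd T \<rho>" "psd T M"
  shows "nonneg (\<Sum>t\<in>T. \<Sum>t'\<in>T. \<rho> t t' * M t t')"
  using assms
proof (induction T arbitrary: \<rho> rule: finite_induct)
  case empty
  then show ?case by (simp add: nonneg_def)
next
  case (insert t0 F)
  have fin: "finite (insert t0 F)" using insert(1) by simp
  have MF: "psd F M" by (rule psd_restrict[OF fin subset_insertI insert(5)])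
  have key: "nonneg (\<Sum>t\<in>insert t0 F. \<Sum>t'\<in>insert t0 F. \<rho>0 t t' * M t t')"
    if p0: "psd (insert t0 F) \<rho>0" and r0: "\<And>t. t \<in> insert t0 F \<Longrightarrow> \<rho>0 t0 t = 0 \<and> \<rho>0 t t0 = 0" for \<rho>0
  proof -
    have "(\<Sum>t\<in>insert t0 F. \<Sum>t'\<in>insert t0 F. \<rho>0 t t' * M t t') = (\<Sum>t\<in>F. \<Sum>t'\<in>F. \<rho>0 t t' * M t t')"
      by (rule sum_insert_zero_row[OF insert(1,2)]) (use r0 in simp)
    then show ?thesis using insert.IH[OF psd_restrict[OF fin subset_insertI p0] MF] by auto
  qed
  show ?case
  proof (cases "\<rho> t0 t0 = 0")
    case True
    show ?thesis
    proof (rule key[OF insert(4)])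
      fix t assume t: "t \<in> insert t0 F"
      have "\<rho> t0 t = 0" by (rule psd_zero_diag[OF fin insert(4) _ t True]) simp
      moreover have "\<rho> t t0 = cnj (\<rho> t0 t)" by (rule psd_herm[OF fin insert(4) t]) simp
      ultimately show "\<rho> t0 t = 0 \<and> \<rho> t t0 = 0" by simp
    qed
  next
    case False
    let ?c = "\<rho> t0 t0"
    let ?s = "\<lambda>t t'. \<rho> t t' - \<rho> t t0 * \<rho> t0 t' / ?c"
    have t0: "t0 \<in> insert t0 F" by simp
    have ps: "psd (insert t0 F) ?s" by (rule psd_schur[OF fin insert(4) t0 False])
    have n1: "nonneg (\<Sum>t\<in>insert t0 F. \<Sum>t'\<in>insert t0 F. ?s t t' * M t t')"
      by (rule key[OF ps]) (use False in simp)
    have cn: "nonneg ?c" by (rule psd_diag[OF fin insert(4) t0])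
    have ic: "nonneg (1 / ?c)"
      proof -
      have e: "?c = complex_of_real (Re ?c)" using cn unfolding nonneg_def by (simp add: complex_eq_iff)
      have q: "1 / ?c = complex_of_real (1 / Re ?c)" by (subst e) simp
      have "nonneg (complex_of_real (1 / Re ?c))" using cn unfolding nonneg_def by simp
      then show ?thesis using q by simp
    qed
    have "nonneg (qf (insert t0 F) M (\<lambda>t. \<rho> t0 t))" using spec[OF insert(5)[unfolded psd_qf], of "\<lambda>t. \<rho> t0 t"] .
    moreover have "qf (insert t0 F) M (\<lambda>t. \<rho> t0 t) = (\<Sum>t\<in>insert t0 F. \<Sum>t'\<in>insert t0 F. (\<rho> t t0 * \<rho> t0 t') * M t t')"
      unfolding qf_def
      proof (rule sum.cong[OF refl], rule sum.cong[OF refl])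
        fix t t' assume t: "t \<in> insert t0 F"
        have "\<rho> t t0 = cnj (\<rho> t0 t)" by (rule psd_herm[OF fin insert(4) t t0])
        then show "cnj (\<rho> t0 t) * M t t' * \<rho> t0 t' = \<rho> t t0 * \<rho> t0 t' * M t t'" by simp
      qed
    ultimately have n2':"nonneg (\<Sum>t\<in>insert t0 F. \<Sum>t'\<in>insert t0 F. (\<rho> t t0 * \<rho> t0 t') * M t t')" by simp
    have n2: "nonneg (1 / ?c * (\<Sum>t\<in>insert t0 F. \<Sum>t'\<in>insert t0 F. (\<rho> t t0 * \<rho> t0 t') * M t t'))"
      using ic n2' by (rule nonneg_mult)
    have "(\<Sum>t\<in>insert t0 F. \<Sum>t'\<in>insert t0 F. \<rho> t t' * M t t') =
      (\<Sum>t\<in>insert t0 F. \<Sum>t'\<in>insert t0 F. ?s t t' * M t t') + 1 / ?c * (\<Sum>t\<in>insert t0 F. \<Sum>t'\<in>insert t0 F. (\<rho> t t0 * \<rho> t0 t') * M t t')"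
      unfolding sum_distrib_left sum.distrib[symmetric]
      proof (rule sum.cong[OF refl], rule sum.cong[OF refl])
        fix t t'
        show "\<rho> t t' * M t t' = (\<rho> t t' - \<rho> t t0 * \<rho> t0 t' / ?c) * M t t' + 1 / ?c * (\<rho> t t0 * \<rho> t0 t' * M t t')"
          using False by (simp add: field_simps)
      qed
    then show ?thesis using nonneg_add[OF n1 n2] by simp
  qed
qed

lemma sum4_swap:
  "(\<Sum>a\<in>A. \<Sum>b\<in>B. \<Sum>c\<in>C. \<Sum>d\<in>D. f a b c d) = (\<Sum>b\<in>B. \<Sum>d\<in>D. \<Sum>a\<in>A. \<Sum>c\<in>C. f a b c d)"
proof -
  have "(\<Sum>a\<in>A. \<Sum>b\<in>B. \<Sum>c\<in>C. \<Sum>d\<in>D. f a b c d) = (\<Sum>a\<in>A. \<Sum>b\<in>B. \<Sum>d\<in>D. \<Sum>c\<in>C. f a b c d)"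
    by (rule sum.cong[OF refl], rule sum.cong[OF refl], rule sum.swap)
  also have "\<dots> = (\<Sum>b\<in>B. \<Sum>a\<in>A. \<Sum>d\<in>D. \<Sum>c\<in>C. f a b c d)"
    by (rule sum.swap)
  also have "\<dots> = (\<Sum>b\<in>B. \<Sum>d\<in>D. \<Sum>a\<in>A. \<Sum>c\<in>C. f a b c d)"
    by (rule sum.cong[OF refl], rule sum.swap)
  finally show ?thesis .
qed

lemma sum_prod2: "(\<Sum>p\<in>A \<times> B. f p) = (\<Sum>a\<in>A. \<Sum>b\<in>B. f (a, b))"
  by (simp add: sum.cartesian_product)

lemma psd_tensor:
  fixes \<omega> :: "'s op" and \<rho> :: "'t op"
  assumes "finite S" "finite T" "psd S \<omega>" "psd T \<rho>"
  shows "psd (S \<times> T) (optensor \<omega> \<rho>)"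
  unfolding psd_qf
proof
  fix v :: "'s \<times> 't \<Rightarrow> complex"
  define M where "M = (\<lambda>t t'. \<Sum>s\<in>S. \<Sum>s'\<in>S. cnj (v (s,t)) * \<omega> s s' * v (s',t'))"
  have "qf (S \<times> T) (optensor \<omega> \<rho>) v = (\<Sum>s\<in>S. \<Sum>t\<in>T. \<Sum>s'\<in>S. \<Sum>t'\<in>T. \<rho> t t' * (cnj (v (s,t)) * \<omega> s s' * v (s',t')))"
    unfolding qf_def sum_prod2 optensor_def sum_distrib_left sum_distrib_right
    by (simp add: algebra_simps)
  also have "\<dots> = (\<Sum>t\<in>T. \<Sum>t'\<in>T. \<Sum>s\<in>S. \<Sum>s'\<in>S. \<rho> t t' * (cnj (v (s,t)) * \<omega> s s' * v (s',t')))"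
    by (rule sum4_swap)
  also have "\<dots> = (\<Sum>t\<in>T. \<Sum>t'\<in>T. \<rho> t t' * M t t')"
    unfolding M_def sum_distrib_left ..
  finally have eq: "qf (S \<times> T) (optensor \<omega> \<rho>) v = (\<Sum>t\<in>T. \<Sum>t'\<in>T. \<rho> t t' * M t t')" .
  have "psd T M"
    unfolding psd_qf
  proof
    fix w
    define u where "u = (\<lambda>s. \<Sum>t'\<in>T. v (s,t') * w t')"
    have "qf T M w = (\<Sum>t\<in>T. \<Sum>t'\<in>T. \<Sum>s\<in>S. \<Sum>s'\<in>S. (cnj (v (s,t)) * cnj (w t)) * \<omega> s s' * (v (s',t') * w t'))"
      unfolding qf_def M_def sum_distrib_left sum_distrib_right
      by (simp add: algebra_simps)
    also have "\<dots> = (\<Sum>s\<in>S. \<Sum>t\<in>T. \<Sum>s'\<in>S. \<Sum>t'\<in>T. (cnj (v (s,t)) * cnj (w t)) * \<omega> s s' * (v (s',t') * w t'))"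
      by (rule sum4_swap[symmetric])
    also have "\<dots> = qf S \<omega> u"
      unfolding qf_def u_def cnj_sum sum_distrib_left sum_distrib_right
      apply (rule sum.cong[OF refl])
      apply (rule trans[OF sum.swap])
      apply (rule sum.cong[OF refl])
      apply (rule trans[OF sum.swap])
      apply (simp add: mult.commute mult.left_commute)
      done
    finally show "nonneg (qf T M w)" using assms(3) unfolding psd_qf by simp
  qed
  then show "nonneg (qf (S \<times> T) (optensor \<omega> \<rho>) v)"
    unfolding eq by (rule frob[OF assms(2,4)])
qed

lemma sum2_delta:
  assumes "finite S" "finite T" "i \<in> S" "j \<in> T"
  shows "(\<Sum>s\<in>S. \<Sum>s'\<in>T. if s = i \<and> s' = j then f s s' else 0) = f i j"
proof -
  have "(\<Sum>s\<in>S. \<Sum>s'\<in>T. if s = i \<and> s' = j then f s s' else 0) = (\<Sum>s\<in>S. if s = i then (\<Sum>s'\<in>T. if s' = j then f s s' else 0) else 0)"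
    by (rule sum.cong[OF refl]) auto
  also have "\<dots> = f i j" using assms by (simp add: sum.delta)
  finally show ?thesis .
qed

lemma qf_restrict':
  assumes "finite S" "T \<subseteq> S" "\<And>i. i \<in> S \<Longrightarrow> i \<notin> T \<Longrightarrow> v i = 0"
  shows "qf S \<rho> v = qf T \<rho> v"
proof -
  have "qf S \<rho> v = (\<Sum>i\<in>T. \<Sum>i'\<in>S. cnj (v i) * \<rho> i i' * v i')"
    unfolding qf_def by (rule sum.mono_neutral_right) (use assms in auto)
  also have "\<dots> = qf T \<rho> v"
    unfolding qf_def by (rule sum.cong[OF refl], rule sum.mono_neutral_right) (use assms in auto)
  finally show ?thesis .
qed

lemma psd_cong:
  assumes "psd S f" "\<And>i j. i \<in> S \<Longrightarrow> j \<in> S \<Longrightarrow> f i j = g i j"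
  shows "psd S g"
proof -
  have "\<And>v. qf S f v = qf S g v" unfolding qf_def
    by (rule sum.cong[OF refl], rule sum.cong[OF refl]) (simp add: assms(2))
  then show ?thesis using assms(1) unfolding psd_qf by simp
qed

lemma psd_slice:
  assumes "finite S" "finite K" "psd (S \<times> K) \<rho>" "s \<in> S"
  shows "psd K (\<lambda>k k'. \<rho> (s,k) (s,k'))"
  unfolding psd_qf
proof
  fix w :: "'b \<Rightarrow> complex"
  define v where "v = (\<lambda>(s',k). if s' = s then w k else 0)"
  have "qf (S \<times> K) \<rho> v = qf ({s} \<times> K) \<rho> v"
    by (rule qf_restrict') (use assms in \<open>auto simp: v_def split: if_splits\<close>)
  also have "\<dots> = qf K (\<lambda>k k'. \<rho> (s,k) (s,k')) w"
    unfolding qf_def sum_prod2 by (simp add: v_def)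
  finally show "nonneg (qf K (\<lambda>k k'. \<rho> (s,k) (s,k')) w)"
    using assms(3) unfolding psd_qf by metis
qed

lemma psd_embed:
  assumes "finite A" "finite M" "psd M \<tau>" "a \<in> A"
  shows "psd (A \<times> M) (\<lambda>(a1,m) (a2,m2). if a1 = a \<and> a2 = a then \<tau> m m2 else 0)"
  unfolding psd_qf
proof
  fix v :: "'a \<times> 'b \<Rightarrow> complex"
  have "qf (A \<times> M) (\<lambda>(a1,m) (a2,m2). if a1 = a \<and> a2 = a then \<tau> m m2 else 0) v =
        qf ({a} \<times> M) (\<lambda>(a1,m) (a2,m2). if a1 = a \<and> a2 = a then \<tau> m m2 else 0) v"
    unfolding qf_def
  proof -
    have "(\<Sum>i\<in>A \<times> M. \<Sum>i'\<in>A \<times> M. cnj (v i) * (case i of (a1, m) \<Rightarrow> \<lambda>(a2, m2). if a1 = a \<and> a2 = a then \<tau> m m2 else 0) i' * v i')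
       = (\<Sum>i\<in>{a} \<times> M. \<Sum>i'\<in>A \<times> M. cnj (v i) * (case i of (a1, m) \<Rightarrow> \<lambda>(a2, m2). if a1 = a \<and> a2 = a then \<tau> m m2 else 0) i' * v i')"
      by (rule sum.mono_neutral_right) (use assms in \<open>auto intro!: sum.neutral split: prod.splits if_splits\<close>)
    also have "\<dots> = (\<Sum>i\<in>{a} \<times> M. \<Sum>i'\<in>{a} \<times> M. cnj (v i) * (case i of (a1, m) \<Rightarrow> \<lambda>(a2, m2). if a1 = a \<and> a2 = a then \<tau> m m2 else 0) i' * v i')"
      by (rule sum.cong[OF refl], rule sum.mono_neutral_right) (use assms in \<open>auto split: if_splits\<close>)
    finally show "(\<Sum>i\<in>A \<times> M. \<Sum>i'\<in>A \<times> M. cnj (v i) * (case i of (a1, m) \<Rightarrow> \<lambda>(a2, m2). if a1 = a \<and> a2 = a then \<tau> m m2 else 0) i' * v i')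
       = (\<Sum>i\<in>{a} \<times> M. \<Sum>i'\<in>{a} \<times> M. cnj (v i) * (case i of (a1, m) \<Rightarrow> \<lambda>(a2, m2). if a1 = a \<and> a2 = a then \<tau> m m2 else 0) i' * v i')" .
  qed
  also have "\<dots> = qf M \<tau> (\<lambda>m. v (a,m))"
    unfolding qf_def sum_prod2 by simp
  finally show "nonneg (qf (A \<times> M) (\<lambda>(a1,m) (a2,m2). if a1 = a \<and> a2 = a then \<tau> m m2 else 0) v)"
    using assms(3) unfolding psd_qf by metis
qed

lemma kapply_ketbra:
  assumes "finite S" "i \<in> S" "j \<in> S"
  shows "kapply K S (ketbra i j) = K i j"
proof (intro ext)
  fix k k'
  have "kapply K S (ketbra i j) k k' = (\<Sum>s\<in>S. \<Sum>s'\<in>S. if s = i \<and> s' = j then K s s' k k' else 0)"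
    unfolding kapply_def ketbra_def by (rule sum.cong[OF refl], rule sum.cong[OF refl]) simp
  also have "\<dots> = K i j k k'"
    by (rule sum2_delta[OF assms(1,1,2,3)])
  finally show "kapply K S (ketbra i j) k k' = K i j k k'" .
qed

lemma optensor_ketbra: "optensor (ketbra a b) (ketbra c d) = ketbra (a,c) (b,d)"
  unfolding optensor_def ketbra_def by (auto intro!: ext)

lemma density_ketbra:
  assumes "finite S" "i \<in> S"
  shows "density S (ketbra i i)"
  unfolding density_def
proof
  show "psd S (ketbra i i)" unfolding psd_qf
  proof
    fix v
    have "qf S (ketbra i i) v = (\<Sum>s\<in>S. \<Sum>s'\<in>S. if s = i \<and> s' = i then cnj (v i) * v i else 0)"
      unfolding qf_def ketbra_def by (rule sum.cong[OF refl], rule sum.cong[OF refl]) simp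
    also have "\<dots> = cnj (v i) * v i"
      by (rule sum2_delta[OF assms(1,1,2,2)])
    finally show "nonneg (qf S (ketbra i i) v)" using nonneg_cnj_mult by simp
  qed
  show "trace S (ketbra i i) = 1" unfolding trace_def ketbra_def using assms by simp
qed

lemma qf_sum: "qf S (\<lambda>s s'. \<Sum>i\<in>I. f i s s') v = (\<Sum>i\<in>I. qf S (f i) v)"
  unfolding qf_def sum_distrib_left sum_distrib_right
  by (subst sum.swap, rule sum.cong[OF refl], subst sum.swap, rule sum.cong[OF refl], rule sum.cong[OF refl]) (simp add: algebra_simps)

lemma psd_sum:
  assumes "\<And>i. i \<in> I \<Longrightarrow> psd S (f i)"
  shows "psd S (\<lambda>s s'. \<Sum>i\<in>I. f i s s')"
  unfolding psd_qf qf_sum using assms unfolding psd_qf by (auto intro!: nonneg_sum)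

lemma psd_scale:
  assumes "nonneg c" "psd S f"
  shows "psd S (\<lambda>s s'. c * f s s')"
proof -
  have "\<And>v. qf S (\<lambda>s s'. c * f s s') v = c * qf S f v"
    unfolding qf_def sum_distrib_left by (rule sum.cong[OF refl], rule sum.cong[OF refl]) (simp add: algebra_simps)
  then show ?thesis using assms unfolding psd_qf by (simp add: nonneg_mult)
qed

lemma psd_slice2:
  assumes "finite T" "finite K" "psd (T \<times> K) X" "k \<in> K"
  shows "psd T (\<lambda>t t'. X (t,k) (t',k))"
  unfolding psd_qf
proof
  fix w :: "'a \<Rightarrow> complex"
  define v where "v = (\<lambda>(t,k'). if k' = k then w t else 0)"
  have "qf (T \<times> K) X v = qf (T \<times> {k}) X v"
    by (rule qf_restrict') (use assms in \<open>auto simp: v_def split: if_splits\<close>)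
  also have "\<dots> = qf T (\<lambda>t t'. X (t,k) (t',k)) w"
    unfolding qf_def sum_prod2 by (simp add: v_def)
  finally show "nonneg (qf T (\<lambda>t t'. X (t,k) (t',k)) w)"
    using assms(3) unfolding psd_qf by metis
qed

lemma kapply_tensor_kid:
  fixes k k1 k2 :: nat
  assumes "finite S" "k1 < k" "k2 < k"
  shows "kapply (ktensor K kid) (S \<times> {..<k}) \<rho> (t,k1) (t',k2) = (\<Sum>s\<in>S. \<Sum>s'\<in>S. K s s' t t' * \<rho> (s,k1) (s',k2))"
proof -
  have "kapply (ktensor K kid) (S \<times> {..<k}) \<rho> (t,k1) (t',k2) =
     (\<Sum>s\<in>S. \<Sum>kk\<in>{..<k}. \<Sum>s'\<in>S. \<Sum>kk'\<in>{..<k}. if kk = k1 \<and> kk' = k2 then K s s' t t' * \<rho> (s,kk) (s',kk') else 0)"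
    unfolding kapply_def ktensor_def kid_def sum_prod2 by (intro sum.cong refl) auto
  also have "\<dots> = (\<Sum>s\<in>S. \<Sum>s'\<in>S. \<Sum>kk\<in>{..<k}. \<Sum>kk'\<in>{..<k}. if kk = k1 \<and> kk' = k2 then K s s' t t' * \<rho> (s,kk) (s',kk') else 0)"
    by (rule sum.cong[OF refl], rule sum.swap)
  also have "\<dots> = (\<Sum>s\<in>S. \<Sum>s'\<in>S. K s s' t t' * \<rho> (s,k1) (s',k2))"
    by (rule sum.cong[OF refl], rule sum.cong[OF refl], rule sum2_delta) (use assms in simp_all)
  finally show ?thesis .
qed

lemma psd_one: "psd {..<Suc 0} (\<lambda>_ _. 1)"
  unfolding psd_qf qf_def by (simp add: nonneg_cnj_mult)

lemma pos_of_CP: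
  assumes "is_CP S T K" "finite S" "finite T" "psd S \<rho>"
  shows "psd T (kapply K S \<rho>)"
proof -
  have p1: "psd (S \<times> {..<Suc 0}) (optensor \<rho> (\<lambda>_ _. 1))"
    by (rule psd_tensor[OF assms(2) _ assms(4) psd_one]) simp
  have "psd (T \<times> {..<Suc 0}) (kapply (ktensor K kid) (S \<times> {..<Suc 0}) (optensor \<rho> (\<lambda>_ _. 1)))"
    using assms(1) p1 unfolding is_CP_def by blast
  then have "psd T (\<lambda>t t'. kapply (ktensor K kid) (S \<times> {..<Suc 0}) (optensor \<rho> (\<lambda>_ _. 1)) (t,0) (t',0))"
    by (rule psd_slice2[OF assms(3) finite_lessThan]) auto
  then show ?thesis
    by (rule psd_cong) (simp add: kapply_tensor_kid[OF assms(2)] optensor_def, simp add: kapply_def)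
qed

definition stch :: "'j op \<Rightarrow> (nat, 'j) kern" where
  "stch \<omega> = (\<lambda>i i' j j'. \<omega> j j')"

lemma stch_CPTP:
  assumes "finite T" "psd T \<omega>" "trace T \<omega> = 1"
  shows "is_CPTP {..<Suc 0} T (stch \<omega>)"
  unfolding is_CPTP_def is_CP_def
proof (intro conjI allI impI)
  fix k :: nat and \<rho>
  assume r: "psd ({..<Suc 0} \<times> {..<k}) \<rho>"
  have "psd {..<k} (\<lambda>k1 k2. \<rho> (0,k1) (0,k2))" by (rule psd_slice[OF _ _ r]) auto
  then have "psd (T \<times> {..<k}) (optensor \<omega> (\<lambda>k1 k2. \<rho> (0,k1) (0,k2)))"
    by (rule psd_tensor[OF assms(1) finite_lessThan assms(2)])
  then show "psd (T \<times> {..<k}) (kapply (ktensor (stch \<omega>) kid) ({..<Suc 0} \<times> {..<k}) \<rho>)"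
    by (rule psd_cong) (auto simp: kapply_tensor_kid optensor_def stch_def)
next
  fix \<rho>
  show "trace T (kapply (stch \<omega>) {..<Suc 0} \<rho>) = trace {..<Suc 0} \<rho>"
    using assms(3) unfolding trace_def kapply_def stch_def by (simp add: sum_distrib_right[symmetric])
qed

definition clch :: "(nat \<Rightarrow> nat \<Rightarrow> real) \<Rightarrow> (nat, nat) kern" where
  "clch q = (\<lambda>x x' a a'. if x = x' \<and> a = a' then complex_of_real (q x a) else 0)"

lemma clch_CPTP:
  assumes "finite X" "finite A" "\<And>x a. x \<in> X \<Longrightarrow> a \<in> A \<Longrightarrow> q x a \<ge> 0" "\<And>x. x \<in> X \<Longrightarrow> (\<Sum>a\<in>A. q x a) = 1"
  shows "is_CPTP X A (clch q)"
  unfolding is_CPTP_def is_CP_def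
proof (intro conjI allI impI)
  fix k :: nat and \<rho>
  assume r: "psd (X \<times> {..<k}) \<rho>"
  have "psd (A \<times> {..<k}) (\<lambda>u u'. \<Sum>a0\<in>A. \<Sum>x\<in>X. complex_of_real (q x a0) *
          (case u of (a1,m) \<Rightarrow> \<lambda>(a2,m2). if a1 = a0 \<and> a2 = a0 then \<rho> (x,m) (x,m2) else 0) u')"
  proof (rule psd_sum, rule psd_sum, rule psd_scale)
    fix a0 x assume a0: "a0 \<in> A" and x: "x \<in> X"
    show "nonneg (complex_of_real (q x a0))" using assms(3)[OF x a0] unfolding nonneg_def by simp
    have "psd {..<k} (\<lambda>m m2. \<rho> (x,m) (x,m2))" by (rule psd_slice[OF assms(1) _ r x]) simp
    then show "psd (A \<times> {..<k}) (\<lambda>(a1,m) (a2,m2). if a1 = a0 \<and> a2 = a0 then \<rho> (x,m) (x,m2) else 0)"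
      by (rule psd_embed[OF assms(2) finite_lessThan _ a0])
  qed
  then show "psd (A \<times> {..<k}) (kapply (ktensor (clch q) kid) (X \<times> {..<k}) \<rho>)"
  proof (rule psd_cong)
    fix u u' assume u: "u \<in> A \<times> {..<k}" and u': "u' \<in> A \<times> {..<k}"
    obtain a m where am: "u = (a,m)" "a \<in> A" "m < k" using u by auto
    obtain a' m' where am': "u' = (a',m')" "a' \<in> A" "m' < k" using u' by auto
    have "kapply (ktensor (clch q) kid) (X \<times> {..<k}) \<rho> u u' = (\<Sum>x\<in>X. \<Sum>x'\<in>X. clch q x x' a a' * \<rho> (x,m) (x',m'))"
      unfolding am(1) am'(1) by (rule kapply_tensor_kid[OF assms(1) am(3) am'(3)])
    also have "\<dots> = (\<Sum>x\<in>X. if a = a' then complex_of_real (q x a) * \<rho> (x,m) (x,m') else 0)"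
    proof (rule sum.cong[OF refl])
      fix x assume x: "x \<in> X"
      have "(\<Sum>x'\<in>X. clch q x x' a a' * \<rho> (x,m) (x',m')) = (\<Sum>x'\<in>X. if x' = x then (if a = a' then complex_of_real (q x a) * \<rho> (x,m) (x,m') else 0) else 0)"
        unfolding clch_def by (rule sum.cong[OF refl]) auto
      also have "\<dots> = (if a = a' then complex_of_real (q x a) * \<rho> (x,m) (x,m') else 0)"
        using assms(1) x by (simp add: sum.delta)
      finally show "(\<Sum>x'\<in>X. clch q x x' a a' * \<rho> (x,m) (x',m')) = (if a = a' then complex_of_real (q x a) * \<rho> (x,m) (x,m') else 0)" .
    qed
    also have "\<dots> = (\<Sum>a0\<in>A. \<Sum>x\<in>X. complex_of_real (q x a0) *
          (case u of (a1,m) \<Rightarrow> \<lambda>(a2,m2). if a1 = a0 \<and> a2 = a0 then \<rho> (x,m) (x,m2) else 0) u')"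
      unfolding am(1) am'(1)
    proof (subst sum.swap, rule sum.cong[OF refl])
      fix x assume x: "x \<in> X"
      show "(if a = a' then complex_of_real (q x a) * \<rho> (x,m) (x,m') else 0) =
          (\<Sum>a0\<in>A. complex_of_real (q x a0) * (case (a, m) of (a1,m) \<Rightarrow> \<lambda>(a2,m2). if a1 = a0 \<and> a2 = a0 then \<rho> (x,m) (x,m2) else 0) (a', m'))"
      proof (cases "a = a'")
        case True
        have "(\<Sum>a0\<in>A. complex_of_real (q x a0) * (case (a, m) of (a1,m) \<Rightarrow> \<lambda>(a2,m2). if a1 = a0 \<and> a2 = a0 then \<rho> (x,m) (x,m2) else 0) (a', m'))
           = (\<Sum>a0\<in>A. if a0 = a then complex_of_real (q x a) * \<rho> (x,m) (x,m') else 0)"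
          using True by (intro sum.cong refl) auto
        also have "\<dots> = complex_of_real (q x a) * \<rho> (x,m) (x,m')" using am(2) assms(2) by (simp add: sum.delta)
        finally show ?thesis using True by simp
      next
        case False
        have "(\<Sum>a0\<in>A. complex_of_real (q x a0) * (case (a, m) of (a1,m) \<Rightarrow> \<lambda>(a2,m2). if a1 = a0 \<and> a2 = a0 then \<rho> (x,m) (x,m2) else 0) (a', m'))
           = (\<Sum>a0\<in>A. 0)"
          using False by (intro sum.cong refl) auto
        then show ?thesis using False by simp
      qed
    qed
    finally show "(\<Sum>a0\<in>A. \<Sum>x\<in>X. complex_of_real (q x a0) *
          (case u of (a1,m) \<Rightarrow> \<lambda>(a2,m2). if a1 = a0 \<and> a2 = a0 then \<rho> (x,m) (x,m2) else 0) u') =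
         kapply (ktensor (clch q) kid) (X \<times> {..<k}) \<rho> u u'" by simp
  qed
next
  fix \<rho>
  have "trace A (kapply (clch q) X \<rho>) = (\<Sum>a\<in>A. \<Sum>x\<in>X. complex_of_real (q x a) * \<rho> x x)"
    unfolding trace_def kapply_def clch_def
  proof (rule sum.cong[OF refl], rule sum.cong[OF refl])
    fix a x assume x: "x \<in> X"
    have "(\<Sum>x'\<in>X. (if x = x' \<and> a = a then complex_of_real (q x a) else 0) * \<rho> x x') = (\<Sum>x'\<in>X. if x' = x then complex_of_real (q x a) * \<rho> x x else 0)"
      by (rule sum.cong[OF refl]) auto
    also have "\<dots> = complex_of_real (q x a) * \<rho> x x" using x assms(1) by (simp add: sum.delta)
    finally show "(\<Sum>x'\<in>X. (if x = x' \<and> a = a then complex_of_real (q x a) else 0) * \<rho> x x') = complex_of_real (q x a) * \<rho> x x" .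
  qed
  also have "\<dots> = (\<Sum>x\<in>X. complex_of_real (\<Sum>a\<in>A. q x a) * \<rho> x x)"
    by (subst sum.swap) (simp add: sum_distrib_right)
  also have "\<dots> = trace X \<rho>"
    unfolding trace_def using assms(4) by simp
  finally show "trace A (kapply (clch q) X \<rho>) = trace X \<rho>" .
qed

lemma pure_psd: "psd S (\<lambda>s s'. cnj (w s) * w s' / 2)"
  unfolding psd_qf
proof
  fix v
  have e: "qf S (\<lambda>s s'. cnj (w s) * w s' / 2) v = cnj (\<Sum>s\<in>S. w s * v s) * (\<Sum>s'\<in>S. w s' * v s') / 2"
    unfolding qf_def cnj_sum sum_product sum_divide_distrib
    by (rule sum.cong[OF refl], rule sum.cong[OF refl]) (simp add: algebra_simps)
  have n: "nonneg (cnj (\<Sum>s\<in>S. w s * v s) * (\<Sum>s'\<in>S. w s' * v s') / 2)"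
    using nonneg_cnj_mult[of "\<Sum>s\<in>S. w s * v s"] unfolding nonneg_def by simp
  show "nonneg (qf S (\<lambda>s s'. cnj (w s) * w s' / 2) v)" unfolding e by (rule n)
qed

lemma dens_two:
  assumes "finite S" "i \<in> S" "j \<in> S" "i \<noteq> j" "cnj \<beta> * \<beta> = 1"
  defines "w \<equiv> (\<lambda>s. if s = i then 1 else if s = j then \<beta> else 0)"
  shows "density S (\<lambda>s s'. cnj (w s) * w s' / 2)"
  unfolding density_def
proof
  show "psd S (\<lambda>s s'. cnj (w s) * w s' / 2)" by (rule pure_psd)
  have "trace S (\<lambda>s s'. cnj (w s) * w s' / 2) = (\<Sum>s\<in>{i,j}. cnj (w s) * w s / 2)"
    unfolding trace_def by (rule sum.mono_neutral_right) (use assms in \<open>auto simp: w_def\<close>)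
  also have "\<dots> = 1" using assms by (simp add: w_def)
  finally show "trace S (\<lambda>s s'. cnj (w s) * w s' / 2) = 1" .
qed

lemma dens_span:
  assumes "finite S" "\<And>\<psi>. density S \<psi> \<Longrightarrow> (\<Sum>i\<in>S. \<Sum>i'\<in>S. c i i' * \<psi> i i') = 0" "i \<in> S" "j \<in> S"
  shows "c i j = 0"
proof -
  have diag: "c k k = 0" if k: "k \<in> S" for k
  proof -
    have "(\<Sum>i\<in>S. \<Sum>i'\<in>S. c i i' * ketbra k k i i') = 0" by (rule assms(2)[OF density_ketbra[OF assms(1) k]])
    moreover have "(\<Sum>i\<in>S. \<Sum>i'\<in>S. c i i' * ketbra k k i i') = (\<Sum>i\<in>S. \<Sum>i'\<in>S. if i = k \<and> i' = k then c k k else 0)"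
      unfolding ketbra_def by (intro sum.cong refl) auto
    moreover have "\<dots> = c k k" by (rule sum2_delta[OF assms(1,1) k k])
    ultimately show ?thesis by simp
  qed
  show ?thesis
  proof (cases "i = j")
    case True
    then show ?thesis using diag assms(3) by simp
  next
    case False
    have gen: "c i i + c i j * \<beta> + cnj \<beta> * c j i + cnj \<beta> * c j j * \<beta> = 0" if b: "cnj \<beta> * \<beta> = 1" for \<beta>
    proof -
      define w where "w = (\<lambda>s. if s = i then 1 else if s = j then \<beta> else 0)"
      have d: "density S (\<lambda>s s'. cnj (w s) * w s' / 2)"
        unfolding w_def by (rule dens_two[OF assms(1,3,4) False b])
      have "(\<Sum>s\<in>S. \<Sum>s'\<in>S. c s s' * (cnj (w s) * w s' / 2)) = qf S c w / 2"
        unfolding qf_def sum_divide_distrib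
        by (rule sum.cong[OF refl], rule sum.cong[OF refl]) (simp add: algebra_simps)
      also have "qf S c w = cnj 1 * c i i * 1 + cnj 1 * c i j * \<beta> + cnj \<beta> * c j i * 1 + cnj \<beta> * c j j * \<beta>"
        unfolding qf_def w_def by (rule qf_two[OF assms(1,3,4) False])
      finally show ?thesis using assms(2)[OF d] by simp
    qed
    have 1: "c i j + c j i = 0" using gen[of 1] diag[OF assms(3)] diag[OF assms(4)] by simp
    have 2: "c i j * \<i> - \<i> * c j i = 0" using gen[of \<i>] diag[OF assms(3)] diag[OF assms(4)] by simp
    show ?thesis using 1 2 by (simp add: algebra_simps complex_eq_iff)
  qed
qed

definition nrm :: "nat set \<Rightarrow> nat op \<Rightarrow> nat op" where
  "nrm T \<omega> = (if trace T \<omega> = 0 then ketbra 0 0 else (\<lambda>j j'. \<omega> j j' / trace T \<omega>))"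

lemma trace_nonneg:
  assumes "finite T" "psd T \<omega>"
  shows "nonneg (trace T \<omega>)"
  unfolding trace_def by (rule nonneg_sum) (rule psd_diag[OF assms])

lemma nrm_props:
  assumes "finite T" "0 \<in> T" "psd T \<omega>"
  shows "density T (nrm T \<omega>)"
    and "\<And>j j'. j \<in> T \<Longrightarrow> j' \<in> T \<Longrightarrow> \<omega> j j' = complex_of_real (Re (trace T \<omega>)) * nrm T \<omega> j j'"
    and "Re (trace T \<omega>) \<ge> 0"
proof -
  have tn: "nonneg (trace T \<omega>)" by (rule trace_nonneg[OF assms(1,3)])
  then show "Re (trace T \<omega>) \<ge> 0" unfolding nonneg_def by simp
  have treal: "complex_of_real (Re (trace T \<omega>)) = trace T \<omega>" using tn unfolding nonneg_def by (simp add: complex_eq_iff)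
  show "density T (nrm T \<omega>)"
  proof (cases "trace T \<omega> = 0")
    case True
    then show ?thesis unfolding nrm_def using density_ketbra[OF assms(1,2)] by simp
  next
    case False
    have "nonneg (1 / trace T \<omega>)"
    proof -
      have q: "1 / trace T \<omega> = complex_of_real (1 / Re (trace T \<omega>))" by (subst treal[symmetric]) simp
      have "nonneg (complex_of_real (1 / Re (trace T \<omega>)))" using tn unfolding nonneg_def by simp
      then show ?thesis using q by simp
    qed
    then have "psd T (\<lambda>j j'. 1 / trace T \<omega> * \<omega> j j')" by (rule psd_scale[OF _ assms(3)])
    then have "psd T (nrm T \<omega>)" unfolding nrm_def using False by simp
    moreover have "trace T (nrm T \<omega>) = 1" unfolding nrm_def trace_def using False
      by (simp add: sum_divide_distrib[symmetric] trace_def[symmetric])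
    ultimately show ?thesis unfolding density_def by simp
  qed
  fix j j' assume j: "j \<in> T" and j': "j' \<in> T"
  show "\<omega> j j' = complex_of_real (Re (trace T \<omega>)) * nrm T \<omega> j j'"
  proof (cases "trace T \<omega> = 0")
    case True
    have "\<forall>t\<in>T. Re (\<omega> t t) = 0"
    proof -
      have "Re (trace T \<omega>) = (\<Sum>t\<in>T. Re (\<omega> t t))" unfolding trace_def by simp
      then have s0: "(\<Sum>t\<in>T. Re (\<omega> t t)) = 0" using True by simp
      have nn: "\<And>t. t \<in> T \<Longrightarrow> 0 \<le> Re (\<omega> t t)" using psd_diag[OF assms(1,3)] unfolding nonneg_def by blast
      have "(\<Sum>t\<in>T. Re (\<omega> t t)) = 0 \<longleftrightarrow> (\<forall>t\<in>T. Re (\<omega> t t) = 0)"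
        by (rule sum_nonneg_eq_0_iff[OF assms(1)]) (rule nn)
      then show ?thesis using s0 by blast
    qed
    then have "\<omega> j j = 0" using psd_diag[OF assms(1,3) j] j unfolding nonneg_def by (simp add: complex_eq_iff)
    then have "\<omega> j j' = 0" by (rule psd_zero_diag[OF assms(1,3) j j'])
    then show ?thesis using True by simp
  next
    case False
    then show ?thesis unfolding nrm_def using treal by simp
  qed
qed

lemma kcomp_kperm:
  assumes "finite S" "inj_on \<sigma> S" "j0 \<in> S" "j0' \<in> S"
  shows "kcomp K S (kperm \<sigma>) i i' (\<sigma> j0) (\<sigma> j0') = K i i' j0 j0'"
proof -
  have "kcomp K S (kperm \<sigma>) i i' (\<sigma> j0) (\<sigma> j0') = (\<Sum>j\<in>S. \<Sum>j'\<in>S. if j = j0 \<and> j' = j0' then K i i' j j' else 0)"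
    unfolding kcomp_def kperm_def
  proof (intro sum.cong refl)
    fix j j' assume j: "j \<in> S" and j': "j' \<in> S"
    have "\<sigma> j0 = \<sigma> j \<longleftrightarrow> j = j0" using assms(2,3) j by (auto dest: inj_onD)
    moreover have "\<sigma> j0' = \<sigma> j' \<longleftrightarrow> j' = j0'" using assms(2,4) j' by (auto dest: inj_onD)
    ultimately show "K i i' j j' * (if \<sigma> j0 = \<sigma> j \<and> \<sigma> j0' = \<sigma> j' then 1 else 0) = (if j = j0 \<and> j' = j0' then K i i' j j' else 0)"
      by simp
  qed
  also have "\<dots> = K i i' j0 j0'" by (rule sum2_delta[OF assms(1,1,3,4)])
  finally show ?thesis .
qed

lemma kcomp_tensor_kid:
  assumes "finite S" "finite M" "m \<in> M" "m2 \<in> M"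
  shows "kcomp K (S \<times> M) (ktensor R kid) i i' (v,m) (v2,m2) = (\<Sum>s\<in>S. \<Sum>s2\<in>S. K i i' (s,m) (s2,m2) * R s s2 v v2)"
proof -
  have "kcomp K (S \<times> M) (ktensor R kid) i i' (v,m) (v2,m2) =
     (\<Sum>s\<in>S. \<Sum>mm\<in>M. \<Sum>s2\<in>S. \<Sum>mm2\<in>M. if mm = m \<and> mm2 = m2 then K i i' (s,mm) (s2,mm2) * R s s2 v v2 else 0)"
    unfolding kcomp_def ktensor_def kid_def sum_prod2 by (intro sum.cong refl) auto
  also have "\<dots> = (\<Sum>s\<in>S. \<Sum>s2\<in>S. \<Sum>mm\<in>M. \<Sum>mm2\<in>M. if mm = m \<and> mm2 = m2 then K i i' (s,mm) (s2,mm2) * R s s2 v v2 else 0)"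
    by (rule sum.cong[OF refl], rule sum.swap)
  also have "\<dots> = (\<Sum>s\<in>S. \<Sum>s2\<in>S. K i i' (s,m) (s2,m2) * R s s2 v v2)"
    by (rule sum.cong[OF refl], rule sum.cong[OF refl], rule sum2_delta) (use assms in simp_all)
  finally show ?thesis .
qed

definition C1 :: "nat \<Rightarrow> nat \<Rightarrow> nat \<Rightarrow> nat \<Rightarrow> (nat, nat \<times> nat) kern \<Rightarrow> (nat, nat \<times> nat) kern \<Rightarrow> (nat \<times> nat, (nat \<times> nat) \<times> (nat \<times> nat)) kern" where
  "C1 dX dY mA mB PA PB = kcomp (ktensor PA PB) (({..<dX} \<times> {..<mA}) \<times> ({..<dY} \<times> {..<mB}))
                  (kperm (\<lambda>((x,m),(y,n)). ((x,y),(m,n))))"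

definition C2 :: "nat \<Rightarrow> nat \<Rightarrow> nat \<Rightarrow> nat \<Rightarrow> (nat, nat \<times> nat) kern \<Rightarrow> (nat, nat \<times> nat) kern \<Rightarrow> (nat \<times> nat, nat \<times> nat) kern \<Rightarrow> (nat \<times> nat, (nat \<times> nat) \<times> (nat \<times> nat)) kern" where
  "C2 dX dY mA mB PA PB R = kcomp (C1 dX dY mA mB PA PB) (({..<dX} \<times> {..<dY}) \<times> ({..<mA} \<times> {..<mB})) (ktensor R kid)"

definition C3 :: "nat \<Rightarrow> nat \<Rightarrow> nat \<Rightarrow> nat \<Rightarrow> nat \<Rightarrow> nat \<Rightarrow> (nat, nat \<times> nat) kern \<Rightarrow> (nat, nat \<times> nat) kern \<Rightarrow> (nat \<times> nat, nat \<times> nat) kern \<Rightarrow> (nat \<times> nat, (nat \<times> nat) \<times> (nat \<times> nat)) kern" where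
  "C3 dX dY dA dB mA mB PA PB R = kcomp (C2 dX dY mA mB PA PB R) (({..<dA} \<times> {..<dB}) \<times> ({..<mA} \<times> {..<mB}))
      (kperm (\<lambda>((a,b),(m,n)). ((a,m),(b,n))))"

lemma branch_C3:
  "supermap_branch dX dY dA dB mA mB PA PB EA EB R =
     kcomp (C3 dX dY dA dB mA mB PA PB R) (({..<dA} \<times> {..<mA}) \<times> ({..<dB} \<times> {..<mB})) (ktensor EA EB)"
  unfolding supermap_branch_def C1_def C2_def C3_def Let_def ..

lemma C1_val:
  fixes dX dY mA mB x m y n x2 m2 y2 n2 :: nat
  assumes "x < dX" "m < mA" "y < dY" "n < mB" "x2 < dX" "m2 < mA" "y2 < dY" "n2 < mB"
  shows "C1 dX dY mA mB PA PB (x',y') (x'',y'') ((x,y),(m,n)) ((x2,y2),(m2,n2)) =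
         PA x' x'' (x,m) (x2,m2) * PB y' y'' (y,n) (y2,n2)"
proof -
  let ?\<sigma> = "(\<lambda>((x,m),(y,n)). ((x,y),(m,n))) :: (nat \<times> nat) \<times> (nat \<times> nat) \<Rightarrow> (nat \<times> nat) \<times> (nat \<times> nat)"
  have inj: "inj_on ?\<sigma> (({..<dX} \<times> {..<mA}) \<times> ({..<dY} \<times> {..<mB}))" by (auto simp: inj_on_def)
  have "C1 dX dY mA mB PA PB (x',y') (x'',y'') (?\<sigma> ((x,m),(y,n))) (?\<sigma> ((x2,m2),(y2,n2))) =
        ktensor PA PB (x',y') (x'',y'') ((x,m),(y,n)) ((x2,m2),(y2,n2))"
    unfolding C1_def by (rule kcomp_kperm[OF _ inj]) (use assms in auto)
  then show ?thesis by (simp add: ktensor_def)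
qed

definition Rcl :: "nat \<Rightarrow> nat \<Rightarrow> nat \<Rightarrow> nat \<Rightarrow> (nat \<times> nat, nat \<times> nat) kern \<Rightarrow> bool" where
  "Rcl dX dY dA dB R \<longleftrightarrow> (\<forall>x<dX. \<forall>x2<dX. \<forall>y<dY. \<forall>y2<dY. \<forall>a<dA. \<forall>a2<dA. \<forall>b<dB. \<forall>b2<dB.
     R (x,y) (x2,y2) (a,b) (a2,b2) = (if x = x2 \<and> y = y2 \<and> a = a2 then R (x,y) (x,y) (a,b) (a,b2) else 0))"

lemma if_sum_out: "(\<Sum>x\<in>S. if P then f x else 0) = (if P then (\<Sum>x\<in>S. f x) else 0)"
  by (cases P) simp_all

lemma C2_val:
  fixes a b m n a2 b2 m2 n2 :: nat
  assumes "Rcl dX dY dA dB R" "a < dA" "b < dB" "m < mA" "n < mB" "a2 < dA" "b2 < dB" "m2 < mA" "n2 < mB"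
  shows "C2 dX dY mA mB PA PB R (x',y') (x'',y'') ((a,b),(m,n)) ((a2,b2),(m2,n2)) =
    (if a = a2 then (\<Sum>x<dX. \<Sum>y<dY. PA x' x'' (x,m) (x,m2) * PB y' y'' (y,n) (y,n2) * R (x,y) (x,y) (a,b) (a,b2)) else 0)"
proof -
  have "C2 dX dY mA mB PA PB R (x',y') (x'',y'') ((a,b),(m,n)) ((a2,b2),(m2,n2)) =
    (\<Sum>s\<in>{..<dX} \<times> {..<dY}. \<Sum>s2\<in>{..<dX} \<times> {..<dY}. C1 dX dY mA mB PA PB (x',y') (x'',y'') (s,(m,n)) (s2,(m2,n2)) * R s s2 (a,b) (a2,b2))"
    unfolding C2_def by (rule kcomp_tensor_kid) (use assms in auto)
  also have "\<dots> = (\<Sum>x<dX. \<Sum>y<dY. \<Sum>x2<dX. \<Sum>y2<dY. if x2 = x \<and> y2 = y then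
       (if a = a2 then PA x' x'' (x,m) (x,m2) * PB y' y'' (y,n) (y,n2) * R (x,y) (x,y) (a,b) (a,b2) else 0) else 0)"
    unfolding sum_prod2
  proof (intro sum.cong refl)
    fix x y x2 y2 assume "x \<in> {..<dX}" "y \<in> {..<dY}" "x2 \<in> {..<dX}" "y2 \<in> {..<dY}"
    then show "C1 dX dY mA mB PA PB (x',y') (x'',y'') ((x,y),(m,n)) ((x2,y2),(m2,n2)) * R (x,y) (x2,y2) (a,b) (a2,b2) =
      (if x2 = x \<and> y2 = y then (if a = a2 then PA x' x'' (x,m) (x,m2) * PB y' y'' (y,n) (y,n2) * R (x,y) (x,y) (a,b) (a,b2) else 0) else 0)"
    proof -
      assume mem: "x \<in> {..<dX}" "y \<in> {..<dY}" "x2 \<in> {..<dX}" "y2 \<in> {..<dY}"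
      have r: "R (x,y) (x2,y2) (a,b) (a2,b2) = (if x = x2 \<and> y = y2 \<and> a = a2 then R (x,y) (x,y) (a,b) (a,b2) else 0)"
        using assms(1) mem assms(2-) unfolding Rcl_def lessThan_iff by blast
      have c: "C1 dX dY mA mB PA PB (x',y') (x'',y'') ((x,y),(m,n)) ((x2,y2),(m2,n2)) = PA x' x'' (x,m) (x2,m2) * PB y' y'' (y,n) (y2,n2)"
        by (rule C1_val) (use mem assms in auto)
      show ?thesis unfolding r c by auto
    qed
  qed
  also have "\<dots> = (\<Sum>x<dX. \<Sum>y<dY. (if a = a2 then PA x' x'' (x,m) (x,m2) * PB y' y'' (y,n) (y,n2) * R (x,y) (x,y) (a,b) (a,b2) else 0))"
    by (intro sum.cong refl, rule sum2_delta) auto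
  also have "\<dots> = (if a = a2 then (\<Sum>x<dX. \<Sum>y<dY. PA x' x'' (x,m) (x,m2) * PB y' y'' (y,n) (y,n2) * R (x,y) (x,y) (a,b) (a,b2)) else 0)"
    by (cases "a = a2") simp_all
  finally show ?thesis .
qed

lemma C3_val:
  fixes a b m n a2 b2 m2 n2 :: nat
  assumes "a < dA" "b < dB" "m < mA" "n < mB" "a2 < dA" "b2 < dB" "m2 < mA" "n2 < mB"
  shows "C3 dX dY dA dB mA mB PA PB R u u' ((a,m),(b,n)) ((a2,m2),(b2,n2)) =
         C2 dX dY mA mB PA PB R u u' ((a,b),(m,n)) ((a2,b2),(m2,n2))"
proof -
  let ?\<sigma> = "(\<lambda>((a,b),(m,n)). ((a,m),(b,n))) :: (nat \<times> nat) \<times> (nat \<times> nat) \<Rightarrow> (nat \<times> nat) \<times> (nat \<times> nat)"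
  have inj: "inj_on ?\<sigma> (({..<dA} \<times> {..<dB}) \<times> ({..<mA} \<times> {..<mB}))" by (auto simp: inj_on_def)
  have "C3 dX dY dA dB mA mB PA PB R u u' (?\<sigma> ((a,b),(m,n))) (?\<sigma> ((a2,b2),(m2,n2))) =
        C2 dX dY mA mB PA PB R u u' ((a,b),(m,n)) ((a2,b2),(m2,n2))"
    unfolding C3_def by (rule kcomp_kperm[OF _ inj]) (use assms in auto)
  then show ?thesis by simp
qed

lemma sum_delta_out4:
  assumes "finite A" "a \<in> A"
  shows "(\<Sum>a2\<in>A. \<Sum>m2\<in>M. \<Sum>b2\<in>B. \<Sum>n2\<in>N. if a = a2 then f a2 m2 b2 n2 else 0) = (\<Sum>m2\<in>M. \<Sum>b2\<in>B. \<Sum>n2\<in>N. f a m2 b2 n2)"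
proof -
  have "(\<Sum>a2\<in>A. \<Sum>m2\<in>M. \<Sum>b2\<in>B. \<Sum>n2\<in>N. if a = a2 then f a2 m2 b2 n2 else 0) =
        (\<Sum>a2\<in>A. if a2 = a then (\<Sum>m2\<in>M. \<Sum>b2\<in>B. \<Sum>n2\<in>N. f a2 m2 b2 n2) else 0)"
    by (rule sum.cong[OF refl]) auto
  also have "\<dots> = (\<Sum>m2\<in>M. \<Sum>b2\<in>B. \<Sum>n2\<in>N. f a m2 b2 n2)" using assms by (simp add: sum.delta)
  finally show ?thesis .
qed

lemma C3C2:
  fixes a b m n a2 b2 m2 n2 :: nat
  assumes "Rcl dX dY dA dB R" "a < dA" "b < dB" "m < mA" "n < mB" "a2 < dA" "b2 < dB" "m2 < mA" "n2 < mB"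
  shows "C3 dX dY dA dB mA mB PA PB R (x',y') (x'',y'') ((a,m),(b,n)) ((a2,m2),(b2,n2)) =
    (if a = a2 then (\<Sum>x<dX. \<Sum>y<dY. PA x' x'' (x,m) (x,m2) * PB y' y'' (y,n) (y,n2) * R (x,y) (x,y) (a,b) (a,b2)) else 0)"
  unfolding C3_val[OF assms(2-9)] C2_val[OF assms] ..

lemma branch_val:
  assumes "Rcl dX dY dA dB R"
  shows "supermap_branch dX dY dA dB mA mB PA PB EA EB R (x',y') (x'',y'') (a',b') (a'',b'') =
    (\<Sum>a<dA. \<Sum>m<mA. \<Sum>b<dB. \<Sum>n<mB. \<Sum>m2<mA. \<Sum>b2<dB. \<Sum>n2<mB.
       (\<Sum>x<dX. \<Sum>y<dY. PA x' x'' (x,m) (x,m2) * PB y' y'' (y,n) (y,n2) * R (x,y) (x,y) (a,b) (a,b2)) *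
       (EA (a,m) (a,m2) a' a'' * EB (b,n) (b2,n2) b' b''))"
proof -
  have "supermap_branch dX dY dA dB mA mB PA PB EA EB R (x',y') (x'',y'') (a',b') (a'',b'') =
    (\<Sum>a<dA. \<Sum>m<mA. \<Sum>b<dB. \<Sum>n<mB. \<Sum>a2<dA. \<Sum>m2<mA. \<Sum>b2<dB. \<Sum>n2<mB.
      C3 dX dY dA dB mA mB PA PB R (x',y') (x'',y'') ((a,m),(b,n)) ((a2,m2),(b2,n2)) * (EA (a,m) (a2,m2) a' a'' * EB (b,n) (b2,n2) b' b''))"
    unfolding branch_C3 kcomp_def sum_prod2 ktensor_def by simp
  also have "\<dots> = (\<Sum>a<dA. \<Sum>m<mA. \<Sum>b<dB. \<Sum>n<mB. \<Sum>a2<dA. \<Sum>m2<mA. \<Sum>b2<dB. \<Sum>n2<mB.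
      if a = a2 then (\<Sum>x<dX. \<Sum>y<dY. PA x' x'' (x,m) (x,m2) * PB y' y'' (y,n) (y,n2) * R (x,y) (x,y) (a,b) (a,b2)) *
       (EA (a,m) (a2,m2) a' a'' * EB (b,n) (b2,n2) b' b'') else 0)"
    by (intro sum.cong refl) (simp only: C3C2[OF assms] lessThan_iff, simp)
  also have "\<dots> = (\<Sum>a<dA. \<Sum>m<mA. \<Sum>b<dB. \<Sum>n<mB. \<Sum>m2<mA. \<Sum>b2<dB. \<Sum>n2<mB.
       (\<Sum>x<dX. \<Sum>y<dY. PA x' x'' (x,m) (x,m2) * PB y' y'' (y,n) (y,n2) * R (x,y) (x,y) (a,b) (a,b2)) *
       (EA (a,m) (a,m2) a' a'' * EB (b,n) (b2,n2) b' b''))"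
    by (rule sum.cong[OF refl], rule sum.cong[OF refl], rule sum.cong[OF refl], rule sum.cong[OF refl], rule sum_delta_out4) auto
  finally show ?thesis .
qed

definition FA :: "nat \<Rightarrow> (nat, nat \<times> nat) kern \<Rightarrow> (nat \<times> nat, nat) kern \<Rightarrow> nat \<Rightarrow> nat \<Rightarrow> (nat, nat) kern" where
  "FA mA PA EA x a = (\<lambda>x' x'' a' a''. \<Sum>m<mA. \<Sum>m2<mA. PA x' x'' (x,m) (x,m2) * EA (a,m) (a,m2) a' a'')"

definition GB :: "nat \<Rightarrow> nat \<Rightarrow> (nat, nat \<times> nat) kern \<Rightarrow> (nat \<times> nat, nat) kern \<Rightarrow> (nat \<times> nat, nat \<times> nat) kern \<Rightarrow> nat \<Rightarrow> nat \<Rightarrow> nat \<Rightarrow> (nat, nat) kern" where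
  "GB dB mB PB EB R x y a = (\<lambda>y' y'' b' b''. \<Sum>b<dB. \<Sum>b2<dB. \<Sum>n<mB. \<Sum>n2<mB.
      PB y' y'' (y,n) (y,n2) * R (x,y) (x,y) (a,b) (a,b2) * EB (b,n) (b2,n2) b' b'')"

lemma branch_fact:
  assumes "Rcl dX dY dA dB R"
  shows "supermap_branch dX dY dA dB mA mB PA PB EA EB R (x',y') (x'',y'') (a',b') (a'',b'') =
    (\<Sum>x<dX. \<Sum>y<dY. \<Sum>a<dA. FA mA PA EA x a x' x'' a' a'' * GB dB mB PB EB R x y a y' y'' b' b'')"
proof -
  have "supermap_branch dX dY dA dB mA mB PA PB EA EB R (x',y') (x'',y'') (a',b') (a'',b'') =
    (\<Sum>a<dA. \<Sum>m<mA. \<Sum>b<dB. \<Sum>n<mB. \<Sum>m2<mA. \<Sum>b2<dB. \<Sum>n2<mB. \<Sum>x<dX. \<Sum>y<dY.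
       PA x' x'' (x,m) (x,m2) * PB y' y'' (y,n) (y,n2) * R (x,y) (x,y) (a,b) (a,b2) *
       (EA (a,m) (a,m2) a' a'' * EB (b,n) (b2,n2) b' b''))"
    unfolding branch_val[OF assms] sum_distrib_right ..
  also have "\<dots> = (\<Sum>(a,m,b,n,m2,b2,n2,x,y)\<in>{..<dA} \<times> {..<mA} \<times> {..<dB} \<times> {..<mB} \<times> {..<mA} \<times> {..<dB} \<times> {..<mB} \<times> {..<dX} \<times> {..<dY}.
       PA x' x'' (x,m) (x,m2) * PB y' y'' (y,n) (y,n2) * R (x,y) (x,y) (a,b) (a,b2) *
       (EA (a,m) (a,m2) a' a'' * EB (b,n) (b2,n2) b' b''))"
    by (simp only: sum.cartesian_product split_def)
  also have "\<dots> = (\<Sum>(x,y,a,b,b2,n,n2,m,m2)\<in>{..<dX} \<times> {..<dY} \<times> {..<dA} \<times> {..<dB} \<times> {..<dB} \<times> {..<mB} \<times> {..<mB} \<times> {..<mA} \<times> {..<mA}.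
       (PA x' x'' (x,m) (x,m2) * EA (a,m) (a,m2) a' a'') * (PB y' y'' (y,n) (y,n2) * R (x,y) (x,y) (a,b) (a,b2) * EB (b,n) (b2,n2) b' b''))"
    by (rule sum.reindex_bij_witness[where i = "\<lambda>(x,y,a,b,b2,n,n2,m,m2). (a,m,b,n,m2,b2,n2,x,y)"
                                     and j = "\<lambda>(a,m,b,n,m2,b2,n2,x,y). (x,y,a,b,b2,n,n2,m,m2)"]) auto
  also have "\<dots> = (\<Sum>x<dX. \<Sum>y<dY. \<Sum>a<dA. FA mA PA EA x a x' x'' a' a'' * GB dB mB PB EB R x y a y' y'' b' b'')"
    unfolding FA_def GB_def sum_distrib_left sum_distrib_right
    by (simp only: sum.cartesian_product split_def)
  finally show ?thesis .
qed

lemma kapply_opt1: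
  assumes "finite X" "finite Y" "x \<in> X" "x2 \<in> X"
  shows "kapply R (X \<times> Y) (optensor (ketbra x x2) \<psi>) v v' = (\<Sum>y\<in>Y. \<Sum>y2\<in>Y. R (x,y) (x2,y2) v v' * \<psi> y y2)"
proof -
  have "kapply R (X \<times> Y) (optensor (ketbra x x2) \<psi>) v v' =
     (\<Sum>x0\<in>X. \<Sum>y\<in>Y. \<Sum>x0'\<in>X. \<Sum>y2\<in>Y. if x0 = x \<and> x0' = x2 then R (x0,y) (x0',y2) v v' * \<psi> y y2 else 0)"
    unfolding kapply_def sum_prod2 optensor_def ketbra_def by (intro sum.cong refl) auto
  also have "\<dots> = (\<Sum>x0\<in>X. \<Sum>x0'\<in>X. \<Sum>y\<in>Y. \<Sum>y2\<in>Y. if x0 = x \<and> x0' = x2 then R (x0,y) (x0',y2) v v' * \<psi> y y2 else 0)"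
    by (rule sum.cong[OF refl], rule sum.swap)
  also have "\<dots> = (\<Sum>x0\<in>X. \<Sum>x0'\<in>X. if x0 = x \<and> x0' = x2 then (\<Sum>y\<in>Y. \<Sum>y2\<in>Y. R (x0,y) (x0',y2) v v' * \<psi> y y2) else 0)"
    by (intro sum.cong refl) (simp add: if_sum_out)
  also have "\<dots> = (\<Sum>y\<in>Y. \<Sum>y2\<in>Y. R (x,y) (x2,y2) v v' * \<psi> y y2)"
    by (rule sum2_delta[OF assms(1,1,3,4)])
  finally show ?thesis .
qed

lemma kapply_opt2:
  assumes "finite X" "finite Y" "y \<in> Y" "y2 \<in> Y"
  shows "kapply R (X \<times> Y) (optensor \<xi> (ketbra y y2)) v v' = (\<Sum>x\<in>X. \<Sum>x2\<in>X. R (x,y) (x2,y2) v v' * \<xi> x x2)"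
proof -
  have "kapply R (X \<times> Y) (optensor \<xi> (ketbra y y2)) v v' =
     (\<Sum>x\<in>X. \<Sum>y0\<in>Y. \<Sum>x2\<in>X. \<Sum>y0'\<in>Y. if y0 = y \<and> y0' = y2 then R (x,y0) (x2,y0') v v' * \<xi> x x2 else 0)"
    unfolding kapply_def sum_prod2 optensor_def ketbra_def by (intro sum.cong refl) auto
  also have "\<dots> = (\<Sum>x\<in>X. \<Sum>x2\<in>X. \<Sum>y0\<in>Y. \<Sum>y0'\<in>Y. if y0 = y \<and> y0' = y2 then R (x,y0) (x2,y0') v v' * \<xi> x x2 else 0)"
    by (rule sum.cong[OF refl], rule sum.swap)
  also have "\<dots> = (\<Sum>x\<in>X. \<Sum>x2\<in>X. R (x,y) (x2,y2) v v' * \<xi> x x2)"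
    by (rule sum.cong[OF refl], rule sum.cong[OF refl], rule sum2_delta) (use assms in auto)
  finally show ?thesis .
qed

lemma kapply_opt_kk:
  assumes "finite X" "finite Y" "x \<in> X" "x2 \<in> X" "y \<in> Y" "y2 \<in> Y"
  shows "kapply R (X \<times> Y) (optensor (ketbra x x2) (ketbra y y2)) = R (x,y) (x2,y2)"
  unfolding optensor_ketbra by (rule kapply_ketbra) (use assms in auto)


lemma res_Rcl:
  assumes res: "is_resource dX TC dY tY dA TC dB tB R"
    and ty: "tY = TC \<or> dY = 1"
  shows "Rcl dX dY dA dB R"
  unfolding Rcl_def
proof (intro allI impI)
  fix x x2 y y2 a a2 b b2
  assume x: "x < dX" and x2: "x2 < dX" and y: "y < dY" and y2: "y2 < dY" and a: "a < dA" and a2: "a2 < dA"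
     and b: "b < dB" and b2: "b2 < dB"
  let ?X = "{..<dX}" and ?Y = "{..<dY}" and ?A = "{..<dA}" and ?B = "{..<dB}"
  have fin: "finite ?X" "finite ?Y" by auto
  note R = res[unfolded is_resource_def Let_def]
  have zx: "R (x,y) (x2,y2) (a,b) (a2,b2) = 0" if ne: "x \<noteq> x2"
  proof -
    have "\<And>\<psi>. density ?Y \<psi> \<Longrightarrow> (\<Sum>y\<in>?Y. \<Sum>y2\<in>?Y. R (x,y) (x2,y2) (a,b) (a2,b2) * \<psi> y y2) = 0"
    proof -
      fix \<psi> assume d: "density ?Y \<psi>"
      have "op_eq_on (?A \<times> ?B) (kapply R (?X \<times> ?Y) (optensor (ketbra x x2) \<psi>)) (\<lambda>_ _. 0)"
        using R ne d x x2 by auto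
      then have "kapply R (?X \<times> ?Y) (optensor (ketbra x x2) \<psi>) (a,b) (a2,b2) = 0"
        unfolding op_eq_on_def using a a2 b b2 by auto
      then show "(\<Sum>y\<in>?Y. \<Sum>y2\<in>?Y. R (x,y) (x2,y2) (a,b) (a2,b2) * \<psi> y y2) = 0"
        using kapply_opt1[OF fin, of x x2 R \<psi> "(a,b)" "(a2,b2)"] x x2 by simp
    qed
    then show ?thesis by (rule dens_span[OF fin(2)]) (use y y2 in auto)
  qed
  have zy: "R (x,y) (x2,y2) (a,b) (a2,b2) = 0" if ne: "y \<noteq> y2"
  proof (cases "tY = TC")
    case True
    have "\<And>\<xi>. density ?X \<xi> \<Longrightarrow> (\<Sum>x\<in>?X. \<Sum>x2\<in>?X. R (x,y) (x2,y2) (a,b) (a2,b2) * \<xi> x x2) = 0"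
    proof -
      fix \<xi> assume d: "density ?X \<xi>"
      have "op_eq_on (?A \<times> ?B) (kapply R (?X \<times> ?Y) (optensor \<xi> (ketbra y y2))) (\<lambda>_ _. 0)"
        using R ne d y y2 True by auto
      then have "kapply R (?X \<times> ?Y) (optensor \<xi> (ketbra y y2)) (a,b) (a2,b2) = 0"
        unfolding op_eq_on_def using a a2 b b2 by auto
      then show "(\<Sum>x\<in>?X. \<Sum>x2\<in>?X. R (x,y) (x2,y2) (a,b) (a2,b2) * \<xi> x x2) = 0"
        using kapply_opt2[OF fin, of y y2 R \<xi> "(a,b)" "(a2,b2)"] y y2 by simp
    qed
    then show ?thesis by (rule dens_span[OF fin(1)]) (use x x2 in auto)
  next
    case False
    then have "dY = 1" using ty by simp
    then show ?thesis using y y2 ne by simp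
  qed
  have za: "R (x,y) (x,y) (a,b) (a2,b2) = 0" if ne: "a \<noteq> a2"
  proof -
    have "density ?X (ketbra x x)" "density ?Y (ketbra y y)" using density_ketbra[OF fin(1), of x] density_ketbra[OF fin(2), of y] x y by auto
    then have "kapply R (?X \<times> ?Y) (optensor (ketbra x x) (ketbra y y)) (a,b) (a2,b2) = 0"
      using R ne a a2 b b2 by auto
    then show ?thesis unfolding kapply_opt_kk[OF fin, of x x y y, simplified, OF x y] .
  qed
  show "R (x,y) (x2,y2) (a,b) (a2,b2) = (if x = x2 \<and> y = y2 \<and> a = a2 then R (x,y) (x,y) (a,b) (a,b2) else 0)"
    using zx zy za by auto
qed

lemma psd_ketbra:
  assumes "finite S" "i \<in> S"
  shows "psd S (ketbra i i)"
  using density_ketbra[OF assms] unfolding density_def by simp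

lemma CP_at:
  assumes "is_CP S T K" "finite S" "finite T" "i \<in> S"
  shows "psd T (K i i)"
proof -
  have "psd T (kapply K S (ketbra i i))" by (rule pos_of_CP[OF assms(1-3) psd_ketbra[OF assms(2,4)]])
  then show ?thesis unfolding kapply_ketbra[OF assms(2,4,4)] .
qed

lemma res_psd:
  assumes "is_resource dX tX dY tY dA tA dB tB R" "x < dX" "y < dY"
  shows "psd ({..<dA} \<times> {..<dB}) (R (x,y) (x,y))"
proof -
  have "is_CP ({..<dX} \<times> {..<dY}) ({..<dA} \<times> {..<dB}) R" using assms(1) unfolding is_resource_def Let_def by simp
  then show ?thesis by (rule CP_at) (use assms in auto)
qed

lemma res_slice_psd:
  assumes "is_resource dX tX dY tY dA tA dB tB R" "x < dX" "y < dY" "a < dA"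
  shows "psd {..<dB} (\<lambda>b b2. R (x,y) (x,y) (a,b) (a,b2))"
  by (rule psd_slice[OF _ _ res_psd[OF assms(1-3)]]) (use assms in auto)

lemma res_Bcl:
  assumes "is_resource dX tX dY tY dA tA dB TC R" "density {..<dX} \<xi>" "density {..<dY} \<psi>"
     "a < dA" "a' < dA" "b < dB" "b' < dB" "b \<noteq> b'"
  shows "kapply R ({..<dX} \<times> {..<dY}) (optensor \<xi> \<psi>) (a,b) (a',b') = 0"
proof -
  have "TC = TC \<longrightarrow> (\<forall>\<xi> \<psi>. density {..<dX} \<xi> \<longrightarrow> density {..<dY} \<psi> \<longrightarrow>
        (\<forall>a\<in>{..<dA}. \<forall>a'\<in>{..<dA}. \<forall>b\<in>{..<dB}. \<forall>b'\<in>{..<dB}. b \<noteq> b' \<longrightarrow> kapply R ({..<dX} \<times> {..<dY}) (optensor \<xi> \<psi>) (a,b) (a',b') = 0))"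
    using assms(1) unfolding is_resource_def Let_def by (elim conjE) assumption
  then show ?thesis using assms(2-) by blast
qed

lemma res_Bmarg:
  assumes "is_resource dX tX dY tY dA tA dB tB R" "density {..<dX} \<xi>" "density {..<dX} \<xi>'" "density {..<dY} \<psi>"
  shows "op_eq_on {..<dB} (\<lambda>b b'. \<Sum>a\<in>{..<dA}. kapply R ({..<dX} \<times> {..<dY}) (optensor \<xi> \<psi>) (a,b) (a,b'))
                    (\<lambda>b b'. \<Sum>a\<in>{..<dA}. kapply R ({..<dX} \<times> {..<dY}) (optensor \<xi>' \<psi>) (a,b) (a,b'))"
proof -
  have "\<forall>\<xi> \<xi>' \<psi>. density {..<dX} \<xi> \<longrightarrow> density {..<dX} \<xi>' \<longrightarrow> density {..<dY} \<psi> \<longrightarrow>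
        op_eq_on {..<dB} (\<lambda>b b'. \<Sum>a\<in>{..<dA}. kapply R ({..<dX} \<times> {..<dY}) (optensor \<xi> \<psi>) (a,b) (a,b'))
                    (\<lambda>b b'. \<Sum>a\<in>{..<dA}. kapply R ({..<dX} \<times> {..<dY}) (optensor \<xi>' \<psi>) (a,b) (a,b'))"
    using assms(1) unfolding is_resource_def Let_def by (elim conjE) assumption
  then show ?thesis using assms(2-) by blast
qed

lemma res_offb:
  assumes res: "is_resource dX tX dY tY dA tA dB TC R" "x < dX" "y < dY" "a < dA" "b < dB" "b2 < dB" "b \<noteq> b2"
  shows "R (x,y) (x,y) (a,b) (a,b2) = 0"
proof -
  have fin: "finite {..<dX}" "finite {..<dY}" by auto
  note R = res(1)[unfolded is_resource_def Let_def]
  have "density {..<dX} (ketbra x x)" "density {..<dY} (ketbra y y)"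
    using density_ketbra[OF fin(1), of x] density_ketbra[OF fin(2), of y] assms by auto
  then have "kapply R ({..<dX} \<times> {..<dY}) (optensor (ketbra x x) (ketbra y y)) (a,b) (a,b2) = 0"
    by (rule res_Bcl[OF res(1)]) (use assms in auto)
  then show ?thesis unfolding kapply_opt_kk[OF fin, of x x y y, simplified, OF assms(2,3)] .
qed

lemma res_nosig:
  assumes res: "is_resource dX tX dY tY dA tA dB tB R" "x < dX" "y < dY" "b < dB"
  shows "(\<Sum>a<dA. R (x,y) (x,y) (a,b) (a,b)) = (\<Sum>a<dA. R (0,y) (0,y) (a,b) (a,b))"
proof -
  have fin: "finite {..<dX}" "finite {..<dY}" by auto
  note R = res(1)[unfolded is_resource_def Let_def]
  have d0: "0 < dX" using R unfolding valid_sys_def by auto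
  have "density {..<dX} (ketbra x x)" "density {..<dX} (ketbra 0 0)" "density {..<dY} (ketbra y y)"
    using density_ketbra[OF fin(1), of x] density_ketbra[OF fin(1), of 0] density_ketbra[OF fin(2), of y] assms d0 by auto
  then have "op_eq_on {..<dB} (\<lambda>b b'. \<Sum>a\<in>{..<dA}. kapply R ({..<dX} \<times> {..<dY}) (optensor (ketbra x x) (ketbra y y)) (a,b) (a,b'))
                    (\<lambda>b b'. \<Sum>a\<in>{..<dA}. kapply R ({..<dX} \<times> {..<dY}) (optensor (ketbra 0 0) (ketbra y y)) (a,b) (a,b'))"
    by (rule res_Bmarg[OF res(1)])
  then have "(\<Sum>a\<in>{..<dA}. kapply R ({..<dX} \<times> {..<dY}) (optensor (ketbra x x) (ketbra y y)) (a,b) (a,b)) =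
             (\<Sum>a\<in>{..<dA}. kapply R ({..<dX} \<times> {..<dY}) (optensor (ketbra 0 0) (ketbra y y)) (a,b) (a,b))"
    unfolding op_eq_on_def using assms(4) by auto
  then show ?thesis
    unfolding kapply_opt_kk[OF fin, of x x y y, simplified, OF assms(2,3)] kapply_opt_kk[OF fin, of 0 0 y y, simplified, OF d0 assms(3)] .
qed

lemma kapply_embed:
  assumes "finite A" "finite M" "a \<in> A"
  shows "kapply E (A \<times> M) (\<lambda>(a1,m) (a2,m2). if a1 = a \<and> a2 = a then \<tau> m m2 else 0) j j' =
         (\<Sum>m\<in>M. \<Sum>m2\<in>M. E (a,m) (a,m2) j j' * \<tau> m m2)"
proof -
  have "kapply E (A \<times> M) (\<lambda>(a1,m) (a2,m2). if a1 = a \<and> a2 = a then \<tau> m m2 else 0) j j' =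
     (\<Sum>a1\<in>A. \<Sum>m\<in>M. \<Sum>a2\<in>A. \<Sum>m2\<in>M. if a1 = a \<and> a2 = a then E (a1,m) (a2,m2) j j' * \<tau> m m2 else 0)"
    unfolding kapply_def sum_prod2 by (intro sum.cong refl) auto
  also have "\<dots> = (\<Sum>a1\<in>A. \<Sum>a2\<in>A. \<Sum>m\<in>M. \<Sum>m2\<in>M. if a1 = a \<and> a2 = a then E (a1,m) (a2,m2) j j' * \<tau> m m2 else 0)"
    by (rule sum.cong[OF refl], rule sum.swap)
  also have "\<dots> = (\<Sum>a1\<in>A. \<Sum>a2\<in>A. if a1 = a \<and> a2 = a then (\<Sum>m\<in>M. \<Sum>m2\<in>M. E (a1,m) (a2,m2) j j' * \<tau> m m2) else 0)"
    by (intro sum.cong refl) (simp add: if_sum_out)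
  also have "\<dots> = (\<Sum>m\<in>M. \<Sum>m2\<in>M. E (a,m) (a,m2) j j' * \<tau> m m2)"
    by (rule sum2_delta[OF assms(1,1,3,3)])
  finally show ?thesis .
qed

lemma FA_psd:
  assumes PA: "is_CP {..<dX'} ({..<dX} \<times> {..<mA}) PA" and EA: "is_CP ({..<dA} \<times> {..<mA}) {..<dA'} EA"
    and "x' < dX'" "x < dX" "a < dA"
  shows "psd {..<dA'} (FA mA PA EA x a x' x')"
proof -
  have s: "psd ({..<dX} \<times> {..<mA}) (PA x' x')" by (rule CP_at[OF PA]) (use assms in auto)
  have s2: "psd {..<mA} (\<lambda>m m2. PA x' x' (x,m) (x,m2))" by (rule psd_slice[OF _ _ s]) (use assms in auto)
  have s3: "psd ({..<dA} \<times> {..<mA}) (\<lambda>(a1,m) (a2,m2). if a1 = a \<and> a2 = a then PA x' x' (x,m) (x,m2) else 0)"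
    by (rule psd_embed[OF _ _ s2]) (use assms in auto)
  have "psd {..<dA'} (kapply EA ({..<dA} \<times> {..<mA}) (\<lambda>(a1,m) (a2,m2). if a1 = a \<and> a2 = a then PA x' x' (x,m) (x,m2) else 0))"
    by (rule pos_of_CP[OF EA _ _ s3]) auto
  then show ?thesis
    by (rule psd_cong) (simp add: kapply_embed assms FA_def mult.commute)
qed

lemma GB_psd:
  assumes PB: "is_CP {..<dY'} ({..<dY} \<times> {..<mB}) PB" and EB: "is_CP ({..<dB} \<times> {..<mB}) {..<dB'} EB"
    and r: "psd {..<dB} (\<lambda>b b2. R (x,y) (x,y) (a,b) (a,b2))"
    and "y' < dY'" "y < dY"
  shows "psd {..<dB'} (GB dB mB PB EB R x y a y' y')"
proof -
  have s: "psd ({..<dY} \<times> {..<mB}) (PB y' y')" by (rule CP_at[OF PB]) (use assms in auto)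
  have s2: "psd {..<mB} (\<lambda>n n2. PB y' y' (y,n) (y,n2))" by (rule psd_slice[OF _ _ s]) (use assms in auto)
  have s3: "psd ({..<dB} \<times> {..<mB}) (optensor (\<lambda>b b2. R (x,y) (x,y) (a,b) (a,b2)) (\<lambda>n n2. PB y' y' (y,n) (y,n2)))"
    by (rule psd_tensor[OF _ _ r s2]) auto
  have "psd {..<dB'} (kapply EB ({..<dB} \<times> {..<mB}) (optensor (\<lambda>b b2. R (x,y) (x,y) (a,b) (a,b2)) (\<lambda>n n2. PB y' y' (y,n) (y,n2))))"
    by (rule pos_of_CP[OF EB _ _ s3]) auto
  then show ?thesis
  proof (rule psd_cong)
    fix b' b'' 
    have "kapply EB ({..<dB} \<times> {..<mB}) (optensor (\<lambda>b b2. R (x,y) (x,y) (a,b) (a,b2)) (\<lambda>n n2. PB y' y' (y,n) (y,n2))) b' b''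
      = (\<Sum>b<dB. \<Sum>n<mB. \<Sum>b2<dB. \<Sum>n2<mB. PB y' y' (y,n) (y,n2) * R (x,y) (x,y) (a,b) (a,b2) * EB (b,n) (b2,n2) b' b'')"
      unfolding kapply_def sum_prod2 optensor_def by (simp add: mult.commute mult.left_commute)
    also have "\<dots> = GB dB mB PB EB R x y a y' y' b' b''"
      unfolding GB_def by (rule sum.cong[OF refl], rule sum.swap)
    finally show "kapply EB ({..<dB} \<times> {..<mB}) (optensor (\<lambda>b b2. R (x,y) (x,y) (a,b) (a,b2)) (\<lambda>n n2. PB y' y' (y,n) (y,n2))) b' b''
      = GB dB mB PB EB R x y a y' y' b' b''" .
  qed
qed

lemma channel_TP0:
  assumes "channel dX tX dA tA K"
  shows "(\<Sum>a<dA. K 0 0 a a) = 1"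
proof -
  have v: "dX \<ge> 1" and tp: "\<And>\<rho>. trace {..<dA} (kapply K {..<dX} \<rho>) = trace {..<dX} \<rho>"
    using assms unfolding channel_def valid_sys_def is_CPTP_def by auto
  have "trace {..<dA} (kapply K {..<dX} (ketbra 0 0)) = trace {..<dX} (ketbra 0 0)" by (rule tp)
  moreover have "kapply K {..<dX} (ketbra 0 0) = K 0 0" by (rule kapply_ketbra) (use v in auto)
  moreover have "trace {..<dX} (ketbra 0 0) = 1" using density_ketbra[of "{..<dX}" 0] v unfolding density_def by auto
  ultimately show ?thesis unfolding trace_def by simp
qed

lemma res_trace00:
  assumes "is_resource dX tX dY tY dA tA dB tB R"
  shows "(\<Sum>a<dA. \<Sum>b<dB. R (0,0) (0,0) (a,b) (a,b)) = 1"
proof -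
  have fin: "finite {..<dX}" "finite {..<dY}" by auto
  have "\<forall>\<xi> \<psi>. density {..<dX} \<xi> \<longrightarrow> density {..<dY} \<psi> \<longrightarrow> trace ({..<dA} \<times> {..<dB}) (kapply R ({..<dX} \<times> {..<dY}) (optensor \<xi> \<psi>)) = 1"
    using assms(1) unfolding is_resource_def Let_def by (elim conjE) assumption
  moreover have v: "0 < dX" "0 < dY" using assms unfolding is_resource_def Let_def valid_sys_def by auto
  moreover have "density {..<dX} (ketbra 0 0)" "density {..<dY} (ketbra 0 0)"
    using density_ketbra[OF fin(1), of 0] density_ketbra[OF fin(2), of 0] v by auto
  ultimately have "trace ({..<dA} \<times> {..<dB}) (kapply R ({..<dX} \<times> {..<dY}) (optensor (ketbra 0 0) (ketbra 0 0))) = 1"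
    by blast
  then show ?thesis
    unfolding kapply_opt_kk[OF fin, of 0 0 0 0, simplified, OF v] trace_def sum_prod2 .
qed

lemma LOSR_intro:
  fixes T :: "'t::countable set" and w :: "'t \<Rightarrow> real" and RA RB :: "'t \<Rightarrow> (nat,nat) kern"
  assumes res: "is_resource dX tX dY tY dA tA dB tB R"
   and fin: "finite T" and w: "\<And>t. t \<in> T \<Longrightarrow> w t \<ge> 0"
   and ch: "\<And>t. t \<in> T \<Longrightarrow> channel dX tX dA tA (RA t) \<and> channel dY tY dB tB (RB t)"
   and eq: "\<And>x y x' y' a b a' b'. x < dX \<Longrightarrow> y < dY \<Longrightarrow> x' < dX \<Longrightarrow> y' < dY \<Longrightarrow> a < dA \<Longrightarrow> b < dB \<Longrightarrow> a' < dA \<Longrightarrow> b' < dB \<Longrightarrow>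
      R (x,y) (x',y') (a,b) (a',b') = (\<Sum>t\<in>T. complex_of_real (w t) * (RA t x x' a a' * RB t y y' b b'))"
  shows "LOSR_free dX tX dY tY dA tA dB tB R"
proof -
  have v: "0 < dX" "0 < dY" using res unfolding is_resource_def Let_def valid_sys_def by auto
  have "1 = (\<Sum>a<dA. \<Sum>b<dB. R (0,0) (0,0) (a,b) (a,b))" using res_trace00[OF res] by simp
  also have "\<dots> = (\<Sum>a<dA. \<Sum>b<dB. \<Sum>t\<in>T. complex_of_real (w t) * (RA t 0 0 a a * RB t 0 0 b b))"
    by (intro sum.cong refl) (simp add: eq v)
  also have "\<dots> = (\<Sum>t\<in>T. \<Sum>a<dA. \<Sum>b<dB. complex_of_real (w t) * (RA t 0 0 a a * RB t 0 0 b b))"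
    by (rule trans[OF sum.cong[OF refl sum.swap]], rule sum.swap)
  also have "\<dots> = (\<Sum>t\<in>T. complex_of_real (w t) * ((\<Sum>a<dA. RA t 0 0 a a) * (\<Sum>b<dB. RB t 0 0 b b)))"
    by (rule sum.cong[OF refl]) (unfold sum_product, unfold sum_distrib_left, rule refl)
  also have "\<dots> = (\<Sum>t\<in>T. complex_of_real (w t))"
  proof (rule sum.cong[OF refl])
    fix t assume t: "t \<in> T"
    have c: "channel dX tX dA tA (RA t)" "channel dY tY dB tB (RB t)" using ch[OF t] by auto
    show "complex_of_real (w t) * ((\<Sum>a<dA. RA t 0 0 a a) * (\<Sum>b<dB. RB t 0 0 b b)) = complex_of_real (w t)"
      using channel_TP0[OF c(1)] channel_TP0[OF c(2)] by simp
  qed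
  finally have s1: "(\<Sum>t\<in>T. w t) = 1"
    by (metis of_real_eq_1_iff of_real_sum)
  let ?I = "to_nat ` T"
  have inj: "inj_on to_nat T" by (rule inj_on_subset[OF inj_to_nat]) simp
  show ?thesis
    unfolding LOSR_free_def
  proof (rule conjI[OF res], rule exI[of _ ?I], rule exI[of _ "\<lambda>i. w (from_nat i)"], rule exI[of _ "\<lambda>i. RA (from_nat i)"], rule exI[of _ "\<lambda>i. RB (from_nat i)"], intro conjI)
    show "finite ?I" using fin by simp
    show "\<forall>i\<in>?I. 0 \<le> w (from_nat i)" using w by auto
    show "(\<Sum>i\<in>?I. w (from_nat i)) = 1" using s1 by (simp add: sum.reindex[OF inj])
    show "\<forall>i\<in>?I. channel dX tX dA tA (RA (from_nat i)) \<and> channel dY tY dB tB (RB (from_nat i))" using ch by auto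
    show "keq ({..<dX} \<times> {..<dY}) ({..<dA} \<times> {..<dB}) R
            (\<lambda>u u' v v'. \<Sum>i\<in>?I. complex_of_real (w (from_nat i)) * ktensor (RA (from_nat i)) (RB (from_nat i)) u u' v v')"
      unfolding keq_def
    proof (intro ballI)
      fix u u' v v' assume u: "u \<in> {..<dX} \<times> {..<dY}" and u': "u' \<in> {..<dX} \<times> {..<dY}"
        and v: "v \<in> {..<dA} \<times> {..<dB}" and v': "v' \<in> {..<dA} \<times> {..<dB}"
      obtain x y where xy: "u = (x,y)" "x < dX" "y < dY" using u by auto
      obtain x' y' where xy': "u' = (x',y')" "x' < dX" "y' < dY" using u' by auto
      obtain a b where ab: "v = (a,b)" "a < dA" "b < dB" using v by auto
      obtain a' b' where ab': "v' = (a',b')" "a' < dA" "b' < dB" using v' by auto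
      show "R u u' v v' = (\<Sum>i\<in>?I. complex_of_real (w (from_nat i)) * ktensor (RA (from_nat i)) (RB (from_nat i)) u u' v v')"
        unfolding xy(1) xy'(1) ab(1) ab'(1) eq[OF xy(2,3) xy'(2,3) ab(2,3) ab'(2,3)]
        by (simp add: sum.reindex[OF inj] ktensor_def)
    qed
  qed
qed

lemma stch_channel:
  assumes "valid_sys dA tA" "psd {..<dA} \<omega>" "trace {..<dA} \<omega> = 1" "tA = TQ"
  shows "channel 1 TI dA tA (stch \<omega>)"
  unfolding channel_def using assms stch_CPTP[of "{..<dA}" \<omega>] by (simp add: valid_sys_def)

lemma clch_channel:
  assumes "valid_sys dX TC" "valid_sys dA TC" "\<And>x a. x < dX \<Longrightarrow> a < dA \<Longrightarrow> q x a \<ge> 0" "\<And>x. x < dX \<Longrightarrow> (\<Sum>a<dA. q x a) = 1"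
  shows "channel dX TC dA TC (clch q)"
  unfolding channel_def
proof (intro conjI allI impI ballI)
  show "valid_sys dX TC" "valid_sys dA TC" by fact+
  show "is_CPTP {..<dX} {..<dA} (clch q)" by (rule clch_CPTP) (use assms in auto)
  fix \<rho> and a a' :: nat assume "a \<noteq> a'"
  then show "kapply (clch q) {..<dX} \<rho> a a' = 0" unfolding kapply_def clch_def by simp
next
  fix i j assume i: "i \<in> {..<dX}" and j: "j \<in> {..<dX}" and ne: "i \<noteq> j"
  show "op_eq_on {..<dA} (kapply (clch q) {..<dX} (ketbra i j)) (\<lambda>_ _. 0)"
    unfolding kapply_ketbra[OF finite_lessThan i j] op_eq_on_def clch_def using ne by simp
qed

lemma tau_parts:
  assumes "LOSR_free_transformation dX tX dY tY dA tA dB tB dX' tX' dY' tY' dA' tA' dB' tB' \<Lambda> p mA mB PA PB EA EB"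
  shows "finite \<Lambda>" "\<And>l. l \<in> \<Lambda> \<Longrightarrow> p l \<ge> 0" "(\<Sum>l\<in>\<Lambda>. p l) = 1"
    "\<And>l. l \<in> \<Lambda> \<Longrightarrow> is_CPTP {..<dX'} ({..<dX} \<times> {..<mA l}) (PA l)"
    "\<And>l. l \<in> \<Lambda> \<Longrightarrow> is_CPTP {..<dY'} ({..<dY} \<times> {..<mB l}) (PB l)"
    "\<And>l. l \<in> \<Lambda> \<Longrightarrow> is_CPTP ({..<dA} \<times> {..<mA l}) {..<dA'} (EA l)"
    "\<And>l. l \<in> \<Lambda> \<Longrightarrow> is_CPTP ({..<dB} \<times> {..<mB l}) {..<dB'} (EB l)"
    "\<And>R. is_resource dX tX dY tY dA tA dB tB R \<Longrightarrow>
        is_resource dX' tX' dY' tY' dA' tA' dB' tB' (supermap dX dY dA dB \<Lambda> p mA mB PA PB EA EB R)"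
  using assms unfolding LOSR_free_transformation_def by auto

lemma supermap_fact:
  assumes "Rcl dX dY dA dB R"
  shows "supermap dX dY dA dB \<Lambda> p mA mB PA PB EA EB R (x',y') (x'',y'') (a',b') (a'',b'') =
    (\<Sum>l\<in>\<Lambda>. \<Sum>x<dX. \<Sum>y<dY. \<Sum>a<dA. complex_of_real (p l) *
        (FA (mA l) (PA l) (EA l) x a x' x'' a' a'' * GB dB (mB l) (PB l) (EB l) R x y a y' y'' b' b''))"
  unfolding supermap_def branch_fact[OF assms] sum_distrib_left ..

lemma case_states:
  assumes tau: "LOSR_free_transformation dX TC dY tY dA TC dB tB 1 TI 1 TI dA' TQ dB' TQ \<Lambda> p mA mB PA PB EA EB"
    and res: "is_resource dX TC dY tY dA TC dB tB R" and ty: "tY = TC \<or> dY = 1"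
    and sA: "valid_sys dA' TQ" and sB: "valid_sys dB' TQ"
  shows "LOSR_free 1 TI 1 TI dA' TQ dB' TQ (supermap dX dY dA dB \<Lambda> p mA mB PA PB EA EB R)"
proof -
  note tp = tau_parts[OF tau]
  have rcl: "Rcl dX dY dA dB R" by (rule res_Rcl[OF res ty])
  define T where "T = \<Lambda> \<times> {..<dX} \<times> {..<dY} \<times> {..<dA}"
  define fa where "fa = (\<lambda>(l,x,y::nat,a). FA (mA l) (PA l) (EA l) x a 0 0)"
  define gb where "gb = (\<lambda>(l,x,y,a). GB dB (mB l) (PB l) (EB l) R x y a 0 0)"
  define w where "w = (\<lambda>t. p (fst t) * Re (trace {..<dA'} (fa t)) * Re (trace {..<dB'} (gb t)))"
  define RA where "RA = (\<lambda>t. stch (nrm {..<dA'} (fa t)))"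
  define RB where "RB = (\<lambda>t. stch (nrm {..<dB'} (gb t)))"
  have dA0: "0 \<in> {..<dA'}" and dB0: "0 \<in> {..<dB'}" using sA sB unfolding valid_sys_def by auto
  have pfa: "psd {..<dA'} (fa t)" if t: "t \<in> T" for t
  proof -
    obtain l x y a where tt: "t = (l,x,y,a)" "l \<in> \<Lambda>" "x < dX" "y < dY" "a < dA" using t unfolding T_def by auto
    show ?thesis unfolding tt fa_def
      by (simp, rule FA_psd) (use tp(4)[OF tt(2)] tp(6)[OF tt(2)] tt in \<open>auto simp: is_CPTP_def\<close>)
  qed
  have pgb: "psd {..<dB'} (gb t)" if t: "t \<in> T" for t
  proof -
    obtain l x y a where tt: "t = (l,x,y,a)" "l \<in> \<Lambda>" "x < dX" "y < dY" "a < dA" using t unfolding T_def by auto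
    show ?thesis unfolding tt gb_def
      by (simp, rule GB_psd) (use tp(5)[OF tt(2)] tp(7)[OF tt(2)] tt res_slice_psd[OF res] in \<open>auto simp: is_CPTP_def\<close>)
  qed
  show ?thesis
  proof (rule LOSR_intro[where T = T and w = w and RA = RA and RB = RB])
    show "is_resource 1 TI 1 TI dA' TQ dB' TQ (supermap dX dY dA dB \<Lambda> p mA mB PA PB EA EB R)"
      by (rule tp(8)[OF res])
    show "finite T" unfolding T_def using tp(1) by simp
    fix t assume t: "t \<in> T"
    show "0 \<le> w t" unfolding w_def using tp(2) t nrm_props(3)[OF _ dA0 pfa[OF t]] nrm_props(3)[OF _ dB0 pgb[OF t]]
      unfolding T_def by auto
    have d1: "density {..<dA'} (nrm {..<dA'} (fa t))" by (rule nrm_props(1)[OF _ dA0 pfa[OF t]]) simp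
    have d2: "density {..<dB'} (nrm {..<dB'} (gb t))" by (rule nrm_props(1)[OF _ dB0 pgb[OF t]]) simp
    show "channel 1 TI dA' TQ (RA t) \<and> channel 1 TI dB' TQ (RB t)"
      unfolding RA_def RB_def
      using stch_channel[OF sA] stch_channel[OF sB] d1 d2 unfolding density_def by auto
  next
    fix x y x' y' a b a' b' :: nat
    assume "x < 1" "y < 1" "x' < 1" "y' < 1" and ab: "a < dA'" "b < dB'" "a' < dA'" "b' < dB'"
    then have z: "x = 0" "y = 0" "x' = 0" "y' = 0" by auto
    have "supermap dX dY dA dB \<Lambda> p mA mB PA PB EA EB R (0,0) (0,0) (a,b) (a',b') =
       (\<Sum>t\<in>T. complex_of_real (p (fst t)) * (fa t a a' * gb t b b'))"
      unfolding supermap_fact[OF rcl] T_def sum_prod2 fa_def gb_def by simp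
    also have "\<dots> = (\<Sum>t\<in>T. complex_of_real (w t) * (RA t 0 0 a a' * RB t 0 0 b b'))"
    proof (rule sum.cong[OF refl])
      fix t assume t: "t \<in> T"
      have "fa t a a' = complex_of_real (Re (trace {..<dA'} (fa t))) * nrm {..<dA'} (fa t) a a'"
        by (rule nrm_props(2)[OF _ dA0 pfa[OF t]]) (use ab in auto)
      moreover have "gb t b b' = complex_of_real (Re (trace {..<dB'} (gb t))) * nrm {..<dB'} (gb t) b b'"
        by (rule nrm_props(2)[OF _ dB0 pgb[OF t]]) (use ab in auto)
      ultimately show "complex_of_real (p (fst t)) * (fa t a a' * gb t b b') = complex_of_real (w t) * (RA t 0 0 a a' * RB t 0 0 b b')"
        unfolding w_def RA_def RB_def stch_def by simp
    qed
    finally show "supermap dX dY dA dB \<Lambda> p mA mB PA PB EA EB R (x,y) (x',y') (a,b) (a',b') =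
       (\<Sum>t\<in>T. complex_of_real (w t) * (RA t x x' a a' * RB t y y' b b'))" unfolding z .
  qed
qed

lemma trace_ketbra_pair:
  assumes "finite S" "i \<in> S" "j \<in> S"
  shows "trace S (ketbra i j) = (if i = j then 1 else 0)"
proof (cases "i = j")
  case True
  then show ?thesis unfolding trace_def ketbra_def using assms by (simp add: sum.delta)
next
  case False
  have "(\<Sum>ia\<in>S. if ia = i \<and> ia = j then 1 else 0) = (0::complex)"
    by (rule sum.neutral) (use False in auto)
  then show ?thesis unfolding trace_def ketbra_def using False by simp
qed

lemma E_TP:
  fixes dA mA dA' a m m2 :: nat
  assumes "is_CPTP ({..<dA} \<times> {..<mA}) {..<dA'} EA" "a < dA" "m < mA" "m2 < mA"
  shows "(\<Sum>a'<dA'. EA (a,m) (a,m2) a' a') = (if m = m2 then 1 else 0)"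
proof -
  have fin: "finite ({..<dA} \<times> {..<mA})" by simp
  have i: "(a,m) \<in> {..<dA} \<times> {..<mA}" "(a,m2) \<in> {..<dA} \<times> {..<mA}" using assms by auto
  have "trace {..<dA'} (kapply EA ({..<dA} \<times> {..<mA}) (ketbra (a,m) (a,m2))) = trace ({..<dA} \<times> {..<mA}) (ketbra (a,m) (a,m2))"
    using assms(1) unfolding is_CPTP_def by blast
  then show ?thesis unfolding kapply_ketbra[OF fin i] trace_ketbra_pair[OF fin i] unfolding trace_def by simp
qed

lemma FA_trace:
  assumes "is_CPTP ({..<dA} \<times> {..<mA}) {..<dA'} EA" "a < dA"
  shows "(\<Sum>a'<dA'. FA mA PA EA x a x' x' a' a') = (\<Sum>m<mA. PA x' x' (x,m) (x,m))"
proof -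
  have "(\<Sum>a'<dA'. FA mA PA EA x a x' x' a' a') = (\<Sum>m<mA. \<Sum>m2<mA. PA x' x' (x,m) (x,m2) * (\<Sum>a'<dA'. EA (a,m) (a,m2) a' a'))"
    unfolding FA_def sum_distrib_left
    by (rule trans[OF sum.swap], rule sum.cong[OF refl], rule sum.swap)
  also have "\<dots> = (\<Sum>m<mA. \<Sum>m2<mA. if m2 = m then PA x' x' (x,m) (x,m) else 0)"
    by (intro sum.cong refl) (auto simp: E_TP[OF assms(1,2)])
  also have "\<dots> = (\<Sum>m<mA. PA x' x' (x,m) (x,m))" by (simp add: sum.delta)
  finally show ?thesis .
qed

lemma P_trace:
  fixes dX' dX mA x' :: nat
  assumes "is_CPTP {..<dX'} ({..<dX} \<times> {..<mA}) PA" "x' < dX'"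
  shows "(\<Sum>x<dX. \<Sum>m<mA. PA x' x' (x,m) (x,m)) = 1"
proof -
  have fin: "finite {..<dX'}" by simp
  have i: "x' \<in> {..<dX'}" using assms by simp
  have "trace ({..<dX} \<times> {..<mA}) (kapply PA {..<dX'} (ketbra x' x')) = trace {..<dX'} (ketbra x' x')"
    using assms(1) unfolding is_CPTP_def by blast
  then show ?thesis unfolding kapply_ketbra[OF fin i i] trace_ketbra_pair[OF fin i i] unfolding trace_def sum_prod2 by simp
qed

lemma GB_class:
  assumes res: "is_resource dX tX dY tY dA tA dB TC R" "x < dX" "y < dY" "a < dA"
  shows "GB dB mB PB EB R x y a y' y'' b' b'' = (\<Sum>b<dB. R (x,y) (x,y) (a,b) (a,b) * FA mB PB EB y b y' y'' b' b'')"
proof -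
  have "GB dB mB PB EB R x y a y' y'' b' b'' = (\<Sum>b<dB. \<Sum>b2<dB. if b2 = b then (\<Sum>n<mB. \<Sum>n2<mB.
      PB y' y'' (y,n) (y,n2) * R (x,y) (x,y) (a,b) (a,b) * EB (b,n) (b,n2) b' b'') else 0)"
    unfolding GB_def
  proof (intro sum.cong refl)
    fix b b2 assume b: "b \<in> {..<dB}" and b2: "b2 \<in> {..<dB}"
    show "(\<Sum>n<mB. \<Sum>n2<mB. PB y' y'' (y,n) (y,n2) * R (x,y) (x,y) (a,b) (a,b2) * EB (b,n) (b2,n2) b' b'') =
      (if b2 = b then (\<Sum>n<mB. \<Sum>n2<mB. PB y' y'' (y,n) (y,n2) * R (x,y) (x,y) (a,b) (a,b) * EB (b,n) (b,n2) b' b'') else 0)"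
      using res_offb[OF res(1-4), of b b2] b b2 by auto
  qed
  also have "\<dots> = (\<Sum>b<dB. (\<Sum>n<mB. \<Sum>n2<mB. PB y' y'' (y,n) (y,n2) * R (x,y) (x,y) (a,b) (a,b) * EB (b,n) (b,n2) b' b''))"
    by (rule sum.cong[OF refl]) (simp add: sum.delta)
  also have "\<dots> = (\<Sum>b<dB. R (x,y) (x,y) (a,b) (a,b) * FA mB PB EB y b y' y'' b' b'')"
    unfolding FA_def sum_distrib_left
    by (intro sum.cong refl) (simp add: algebra_simps)
  finally show ?thesis .
qed

lemma res_Xcl_kern:
  assumes "is_resource dX TC 1 TI dA tA dB tB R" "x < dX" "x2 < dX" "x \<noteq> x2" "a < dA" "a2 < dA" "b < dB" "b2 < dB"
  shows "R (x,0) (x2,0) (a,b) (a2,b2) = 0"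
proof -
  have "TC = TC \<longrightarrow> (\<forall>i\<in>{..<dX}. \<forall>j\<in>{..<dX}. \<forall>\<psi>. i \<noteq> j \<longrightarrow> density {..<1} \<psi> \<longrightarrow>
        op_eq_on ({..<dA} \<times> {..<dB}) (kapply R ({..<dX} \<times> {..<1}) (optensor (ketbra i j) \<psi>)) (\<lambda>_ _. 0))"
    using assms(1) unfolding is_resource_def Let_def by (elim conjE) assumption
  moreover have "density {..<1::nat} (ketbra 0 0)" by (rule density_ketbra) auto
  ultimately have "op_eq_on ({..<dA} \<times> {..<dB}) (kapply R ({..<dX} \<times> {..<1}) (optensor (ketbra x x2) (ketbra 0 0))) (\<lambda>_ _. 0)"
    using assms by blast
  moreover have "kapply R ({..<dX} \<times> {..<1}) (optensor (ketbra x x2) (ketbra 0 0)) = R (x,0) (x2,0)"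
    by (rule kapply_opt_kk) (use assms in auto)
  ultimately show ?thesis unfolding op_eq_on_def using assms by auto
qed

lemma res_Acl_kern:
  assumes "is_resource dX tX 1 TI dA TC dB tB R" "x < dX" "a < dA" "a2 < dA" "a \<noteq> a2" "b < dB" "b2 < dB"
  shows "R (x,0) (x,0) (a,b) (a2,b2) = 0"
proof -
  have "TC = TC \<longrightarrow> (\<forall>\<xi> \<psi>. density {..<dX} \<xi> \<longrightarrow> density {..<1} \<psi> \<longrightarrow>
        (\<forall>a\<in>{..<dA}. \<forall>a'\<in>{..<dA}. \<forall>b\<in>{..<dB}. \<forall>b'\<in>{..<dB}. a \<noteq> a' \<longrightarrow> kapply R ({..<dX} \<times> {..<1}) (optensor \<xi> \<psi>) (a,b) (a',b') = 0))"
    using assms(1) unfolding is_resource_def Let_def by (elim conjE) assumption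
  moreover have "density {..<1::nat} (ketbra 0 0)" by (rule density_ketbra) auto
  moreover have "density {..<dX} (ketbra x x)" by (rule density_ketbra) (use assms in auto)
  ultimately have "kapply R ({..<dX} \<times> {..<1}) (optensor (ketbra x x) (ketbra 0 0)) (a,b) (a2,b2) = 0"
    using assms by blast
  moreover have "kapply R ({..<dX} \<times> {..<1}) (optensor (ketbra x x) (ketbra 0 0)) = R (x,0) (x,0)"
    by (rule kapply_opt_kk) (use assms in auto)
  ultimately show ?thesis by simp
qed

lemma case_assem:
  assumes tau: "LOSR_free_transformation dX TC dY TC dA TC dB TC dX' TC 1 TI dA' TC dB' TQ \<Lambda> p mA mB PA PB EA EB"
    and res: "is_resource dX TC dY TC dA TC dB TC R"
    and sX: "valid_sys dX' TC" and sA: "valid_sys dA' TC" and sB: "valid_sys dB' TQ"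
  shows "LOSR_free dX' TC 1 TI dA' TC dB' TQ (supermap dX dY dA dB \<Lambda> p mA mB PA PB EA EB R)"
proof -
  note tp = tau_parts[OF tau]
  have rcl: "Rcl dX dY dA dB R" by (rule res_Rcl[OF res]) simp
  have dA0: "0 < dA'" and dB0: "0 \<in> {..<dB'}" using sA sB unfolding valid_sys_def by auto
  define P where "P = (\<lambda>x y a b. Re (R (x,y) (x,y) (a,b) (a,b)))"
  define Pb where "Pb = (\<lambda>y b. \<Sum>a<dA. P 0 y a b)"
  have Pnn: "P x y a b \<ge> 0 \<and> R (x,y) (x,y) (a,b) (a,b) = complex_of_real (P x y a b)"
    if "x < dX" "y < dY" "a < dA" "b < dB" for x y a b
  proof -
    have "nonneg (R (x,y) (x,y) (a,b) (a,b))"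
      by (rule psd_diag[OF _ res_psd[OF res that(1,2)]]) (use that in auto)
    then show ?thesis unfolding P_def nonneg_def by (simp add: complex_eq_iff)
  qed
  have Pns: "(\<Sum>a<dA. P x y a b) = Pb y b" if "x < dX" "y < dY" "b < dB" for x y b
  proof -
    have "(\<Sum>a<dA. R (x,y) (x,y) (a,b) (a,b)) = (\<Sum>a<dA. R (0,y) (0,y) (a,b) (a,b))"
      by (rule res_nosig[OF res that])
    then have "Re (\<Sum>a<dA. R (x,y) (x,y) (a,b) (a,b)) = Re (\<Sum>a<dA. R (0,y) (0,y) (a,b) (a,b))" by simp
    then show ?thesis unfolding Pb_def P_def Re_sum .
  qed
  have Pb0: "P x y a b = 0" if "x < dX" "y < dY" "a < dA" "b < dB" "Pb y b = 0" for x y a b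
  proof -
    have "P x y a b \<le> (\<Sum>a'<dA. P x y a' b)"
      by (rule member_le_sum) (use that Pnn in auto)
    then show ?thesis using Pns[OF that(1,2,4)] that(5) Pnn[OF that(1-4)] by simp
  qed
  have Pbnn: "Pb y b \<ge> 0" if "y < dY" "b < dB" for y b
  proof -
    have "0 < dX" using res unfolding is_resource_def Let_def valid_sys_def by auto
    then show ?thesis unfolding Pb_def by (intro sum_nonneg) (use that Pnn in auto)
  qed
  define T where "T = \<Lambda> \<times> {..<dY} \<times> {..<dB}"
  define om where "om = (\<lambda>(l,y,b). FA (mB l) (PB l) (EB l) y b 0 0)"
  define fd where "fd = (\<lambda>l x a x' a'. Re (FA (mA l) (PA l) (EA l) x a x' x' a' a'))"
  define c where "c = (\<lambda>l x x'. Re (\<Sum>m<mA l. PA l x' x' (x,m) (x,m)))"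
  define G where "G = (\<lambda>(l,y,b) x' a'. \<Sum>x<dX. \<Sum>a<dA. P x y a b * fd l x a x' a')"
  define q where "q = (\<lambda>(l,y,b) x' (a'::nat). if Pb y b = 0 then (if a' = 0 then 1 else 0) else G (l,y,b) x' a' / Pb y b)"
  define w where "w = (\<lambda>(l,y,b). p l * Pb y b * Re (trace {..<dB'} (om (l,y,b))))"
  define RA where "RA = (\<lambda>t. clch (q t))"
  define RB where "RB = (\<lambda>t. stch (nrm {..<dB'} (om t)))"
  have fdnn: "fd l x a x' a' \<ge> 0 \<and> FA (mA l) (PA l) (EA l) x a x' x' a' a' = complex_of_real (fd l x a x' a')"
    if "l \<in> \<Lambda>" "x < dX" "a < dA" "x' < dX'" "a' < dA'" for l x a x' a'
  proof -
    have "psd {..<dA'} (FA (mA l) (PA l) (EA l) x a x' x')"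
      by (rule FA_psd) (use tp(4)[OF that(1)] tp(6)[OF that(1)] that in \<open>auto simp: is_CPTP_def\<close>)
    then have "nonneg (FA (mA l) (PA l) (EA l) x a x' x' a' a')" by (rule psd_diag[OF finite_lessThan]) (use that in auto)
    then show ?thesis unfolding fd_def nonneg_def by (simp add: complex_eq_iff)
  qed
  have fdsum: "(\<Sum>a'<dA'. fd l x a x' a') = c l x x'" if "l \<in> \<Lambda>" "a < dA" for l x a x'
    using FA_trace[OF tp(6)[OF that(1)] that(2), of "PA l" x x'] unfolding fd_def c_def Re_sum[symmetric] by simp
  have csum: "(\<Sum>x<dX. c l x x') = 1" if "l \<in> \<Lambda>" "x' < dX'" for l x'
    using P_trace[OF tp(4)[OF that(1)] that(2)] unfolding c_def Re_sum[symmetric] by simp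
  have omp: "psd {..<dB'} (om t)" if t: "t \<in> T" for t
  proof -
    obtain l y b where tt: "t = (l,y,b)" "l \<in> \<Lambda>" "y < dY" "b < dB" using t unfolding T_def by auto
    show ?thesis unfolding tt om_def
      by (simp, rule FA_psd) (use tp(5)[OF tt(2)] tp(7)[OF tt(2)] tt in \<open>auto simp: is_CPTP_def\<close>)
  qed
  have Gnn: "G (l,y,b) x' a' \<ge> 0" if "l \<in> \<Lambda>" "y < dY" "b < dB" "x' < dX'" "a' < dA'" for l y b x' a'
    unfolding G_def by (simp, intro sum_nonneg mult_nonneg_nonneg) (use that Pnn fdnn in auto)
  have G0: "G (l,y,b) x' a' = 0" if "l \<in> \<Lambda>" "y < dY" "b < dB" "Pb y b = 0" for l y b x' a'
    unfolding G_def using Pb0 that by simp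
  have Gsum: "(\<Sum>a'<dA'. G (l,y,b) x' a') = Pb y b" if "l \<in> \<Lambda>" "y < dY" "b < dB" "x' < dX'" for l y b x'
  proof -
    have "(\<Sum>a'<dA'. G (l,y,b) x' a') = (\<Sum>x<dX. \<Sum>a<dA. P x y a b * (\<Sum>a'<dA'. fd l x a x' a'))"
      unfolding G_def sum_distrib_left
      by (simp, rule trans[OF sum.swap], rule sum.cong[OF refl], rule sum.swap)
    also have "\<dots> = (\<Sum>x<dX. c l x x' * (\<Sum>a<dA. P x y a b))"
      by (intro sum.cong refl) (simp add: fdsum that sum_distrib_left mult.commute)
    also have "\<dots> = (\<Sum>x<dX. c l x x' * Pb y b)"
      by (intro sum.cong refl) (simp add: Pns that)
    also have "\<dots> = Pb y b" unfolding sum_distrib_right[symmetric] csum[OF that(1,4)] by simp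
    finally show ?thesis .
  qed
  have qnn: "q (l,y,b) x' a' \<ge> 0" if "l \<in> \<Lambda>" "y < dY" "b < dB" "x' < dX'" "a' < dA'" for l y b x' a'
    unfolding q_def using Gnn[OF that] Pbnn[OF that(2,3)] by simp
  have qsum: "(\<Sum>a'<dA'. q (l,y,b) x' a') = 1" if "l \<in> \<Lambda>" "y < dY" "b < dB" "x' < dX'" for l y b x'
  proof (cases "Pb y b = 0")
    case True
    then show ?thesis unfolding q_def using dA0 by (simp add: sum.delta)
  next
    case False
    then show ?thesis unfolding q_def using Gsum[OF that] by (simp add: sum_divide_distrib[symmetric])
  qed
  have wq: "w (l,y,b) * q (l,y,b) x' a' = p l * G (l,y,b) x' a' * Re (trace {..<dB'} (om (l,y,b)))"
    if "l \<in> \<Lambda>" "y < dY" "b < dB" for l y b x' a'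
  proof (cases "Pb y b = 0")
    case True
    then show ?thesis unfolding w_def using G0[OF that True] by simp
  next
    case False
    then show ?thesis unfolding w_def q_def by simp
  qed
  show ?thesis
  proof (rule LOSR_intro[where T = T and w = w and RA = RA and RB = RB])
    show "is_resource dX' TC 1 TI dA' TC dB' TQ (supermap dX dY dA dB \<Lambda> p mA mB PA PB EA EB R)"
      by (rule tp(8)[OF res])
    show "finite T" unfolding T_def using tp(1) by simp
    fix t assume t: "t \<in> T"
    obtain l y b where tt: "t = (l,y,b)" "l \<in> \<Lambda>" "y < dY" "b < dB" using t unfolding T_def by auto
    show "0 \<le> w t" unfolding tt w_def using tp(2)[OF tt(2)] Pbnn[OF tt(3,4)] nrm_props(3)[OF _ dB0 omp[OF t]]
      unfolding tt by simp
    have d2: "density {..<dB'} (nrm {..<dB'} (om t))" by (rule nrm_props(1)[OF _ dB0 omp[OF t]]) simp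
    have c1: "channel dX' TC dA' TC (RA t)"
      unfolding RA_def tt by (rule clch_channel[OF sX sA]) (use qnn qsum tt in auto)
    show "channel dX' TC dA' TC (RA t) \<and> channel 1 TI dB' TQ (RB t)"
      unfolding RB_def using c1 stch_channel[OF sB] d2 unfolding density_def by auto
  next
    fix x y x' y' a b a' b' :: nat
    assume xy: "x < dX'" "y < 1" "x' < dX'" "y' < 1" and ab: "a < dA'" "b < dB'" "a' < dA'" "b' < dB'"
    then have z: "y = 0" "y' = 0" by auto
    let ?tR = "supermap dX dY dA dB \<Lambda> p mA mB PA PB EA EB R"
    have tres: "is_resource dX' TC 1 TI dA' TC dB' TQ ?tR" by (rule tp(8)[OF res])
    show "?tR (x,y) (x',y') (a,b) (a',b') = (\<Sum>t\<in>T. complex_of_real (w t) * (RA t x x' a a' * RB t y y' b b'))"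
    proof (cases "x = x' \<and> a = a'")
      case False
      have "?tR (x,0) (x',0) (a,b) (a',b') = 0"
      proof (cases "x = x'")
        case True
        then have "a \<noteq> a'" using False by simp
        then show ?thesis unfolding True by (rule res_Acl_kern[OF tres xy(3) ab(1) ab(3) _ ab(2) ab(4)])
      next
        case False
        then show ?thesis by (rule res_Xcl_kern[OF tres xy(1) xy(3) _ ab(1) ab(3) ab(2) ab(4)])
      qed
      moreover have "(\<Sum>t\<in>T. complex_of_real (w t) * (RA t x x' a a' * RB t y y' b b')) = 0"
        using False unfolding RA_def clch_def by (intro sum.neutral) auto
      ultimately show ?thesis unfolding z by simp
    next
      case True
      then have e: "x' = x" "a' = a" by auto
      have "?tR (x,0) (x,0) (a,b) (a,b') = (\<Sum>l\<in>\<Lambda>. \<Sum>xx<dX. \<Sum>yy<dY. \<Sum>aa<dA. \<Sum>bb<dB.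
           complex_of_real (p l) * (complex_of_real (fd l xx aa x a) * (complex_of_real (P xx yy aa bb) * om (l,yy,bb) b b')))"
        unfolding supermap_fact[OF rcl]
      proof (intro sum.cong refl)
        fix l xx yy aa assume m: "l \<in> \<Lambda>" "xx \<in> {..<dX}" "yy \<in> {..<dY}" "aa \<in> {..<dA}"
        have g: "GB dB (mB l) (PB l) (EB l) R xx yy aa 0 0 b b' = (\<Sum>bb<dB. R (xx,yy) (xx,yy) (aa,bb) (aa,bb) * FA (mB l) (PB l) (EB l) yy bb 0 0 b b')"
          by (rule GB_class[OF res]) (use m in auto)
        have f: "FA (mA l) (PA l) (EA l) xx aa x x a a = complex_of_real (fd l xx aa x a)"
          using fdnn[of l xx aa x a] m xy ab by auto
        show "complex_of_real (p l) * (FA (mA l) (PA l) (EA l) xx aa x x a a * GB dB (mB l) (PB l) (EB l) R xx yy aa 0 0 b b') =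
          (\<Sum>bb<dB. complex_of_real (p l) * (complex_of_real (fd l xx aa x a) * (complex_of_real (P xx yy aa bb) * om (l,yy,bb) b b')))"
          unfolding g f sum_distrib_left
          by (rule sum.cong[OF refl]) (use Pnn m in \<open>auto simp: om_def\<close>)
      qed
      also have "\<dots> = (\<Sum>l\<in>\<Lambda>. \<Sum>yy<dY. \<Sum>bb<dB. \<Sum>xx<dX. \<Sum>aa<dA.
           complex_of_real (p l) * (complex_of_real (fd l xx aa x a) * (complex_of_real (P xx yy aa bb) * om (l,yy,bb) b b')))"
        by (rule sum.cong[OF refl], rule sum4_swap)
      also have "\<dots> = (\<Sum>l\<in>\<Lambda>. \<Sum>yy<dY. \<Sum>bb<dB. complex_of_real (p l) * (complex_of_real (G (l,yy,bb) x a) * om (l,yy,bb) b b'))"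
      proof (intro sum.cong refl)
        fix l yy bb
        have Gx: "complex_of_real (G (l,yy,bb) x a) = (\<Sum>xx<dX. \<Sum>aa<dA. complex_of_real (P xx yy aa bb) * complex_of_real (fd l xx aa x a))"
          unfolding G_def by simp
        show "(\<Sum>xx<dX. \<Sum>aa<dA. complex_of_real (p l) * (complex_of_real (fd l xx aa x a) * (complex_of_real (P xx yy aa bb) * om (l,yy,bb) b b'))) =
          complex_of_real (p l) * (complex_of_real (G (l,yy,bb) x a) * om (l,yy,bb) b b')"
          unfolding Gx sum_distrib_left sum_distrib_right
          by (intro sum.cong refl) (simp add: algebra_simps)
      qed
      also have "\<dots> = (\<Sum>t\<in>T. complex_of_real (w t) * (RA t x x a a * RB t 0 0 b b'))"
        unfolding T_def sum_prod2
      proof (intro sum.cong refl)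
        fix l yy bb assume m: "l \<in> \<Lambda>" "yy \<in> {..<dY}" "bb \<in> {..<dB}"
        have t: "(l,yy,bb) \<in> T" using m unfolding T_def by auto
        have o: "om (l,yy,bb) b b' = complex_of_real (Re (trace {..<dB'} (om (l,yy,bb)))) * nrm {..<dB'} (om (l,yy,bb)) b b'"
          by (rule nrm_props(2)[OF _ dB0 omp[OF t]]) (use ab in auto)
        have "complex_of_real (w (l,yy,bb)) * complex_of_real (q (l,yy,bb) x a) = complex_of_real (p l * G (l,yy,bb) x a * Re (trace {..<dB'} (om (l,yy,bb))))"
          unfolding of_real_mult[symmetric] wq[OF m[simplified]] ..
        then show "complex_of_real (p l) * (complex_of_real (G (l,yy,bb) x a) * om (l,yy,bb) b b') =
             complex_of_real (w (l,yy,bb)) * (RA (l,yy,bb) x x a a * RB (l,yy,bb) 0 0 b b')"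
          unfolding RA_def RB_def clch_def stch_def o by (simp add: algebra_simps)
      qed
      finally show ?thesis unfolding z e .
    qed
  qed
qed

theorem proposition2:
  fixes dX dY dA dB dX' dY' dA' dB' :: nat
    and tX tY tA tB tX' tY' tA' tB' :: systype
    and \<Lambda> :: "nat set" and p :: "nat \<Rightarrow> real" and mA mB :: "nat \<Rightarrow> nat"
    and PA PB :: "nat \<Rightarrow> (nat, nat \<times> nat) kern"
    and EA EB :: "nat \<Rightarrow> (nat \<times> nat, nat) kern"
    and R :: "(nat \<times> nat, nat \<times> nat) kern"
  assumes types:
    "((tX, tY, tA, tB), (tX', tY', tA', tB')) = ((TC, TC, TC, TC), (TI, TI, TQ, TQ)) \<or>
     ((tX, tY, tA, tB), (tX', tY', tA', tB')) = ((TC, TC, TC, TC), (TC, TI, TC, TQ)) \<or>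
     ((tX, tY, tA, tB), (tX', tY', tA', tB')) = ((TC, TI, TC, TQ), (TI, TI, TQ, TQ))"
    and sys: "valid_sys dX tX" "valid_sys dY tY" "valid_sys dA tA" "valid_sys dB tB"
      "valid_sys dX' tX'" "valid_sys dY' tY'" "valid_sys dA' tA'" "valid_sys dB' tB'"
    and tau: "LOSR_free_transformation dX tX dY tY dA tA dB tB dX' tX' dY' tY' dA' tA' dB' tB'
                \<Lambda> p mA mB PA PB EA EB"
    and res: "is_resource dX tX dY tY dA tA dB tB R"
  shows "LOSR_free dX' tX' dY' tY' dA' tA' dB' tB'
           (supermap dX dY dA dB \<Lambda> p mA mB PA PB EA EB R)"
  using types
proof (elim disjE)
  assume t: "((tX, tY, tA, tB), (tX', tY', tA', tB')) = ((TC, TC, TC, TC), (TI, TI, TQ, TQ))"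
  then have tt: "tX = TC" "tY = TC" "tA = TC" "tB = TC" "tX' = TI" "tY' = TI" "tA' = TQ" "tB' = TQ" by auto
  have d: "dX' = 1" "dY' = 1" using sys(5,6) tt unfolding valid_sys_def by auto
  show ?thesis unfolding tt d
    by (rule case_states) (use tau res sys tt d in auto)
next
  assume t: "((tX, tY, tA, tB), (tX', tY', tA', tB')) = ((TC, TC, TC, TC), (TC, TI, TC, TQ))"
  then have tt: "tX = TC" "tY = TC" "tA = TC" "tB = TC" "tX' = TC" "tY' = TI" "tA' = TC" "tB' = TQ" by auto
  have d: "dY' = 1" using sys(6) tt unfolding valid_sys_def by auto
  show ?thesis unfolding tt d
    by (rule case_assem) (use tau res sys tt d in auto)
next
  assume t: "((tX, tY, tA, tB), (tX', tY', tA', tB')) = ((TC, TI, TC, TQ), (TI, TI, TQ, TQ))"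
  then have tt: "tX = TC" "tY = TI" "tA = TC" "tB = TQ" "tX' = TI" "tY' = TI" "tA' = TQ" "tB' = TQ" by auto
  have d: "dX' = 1" "dY' = 1" "dY = 1" using sys(2,5,6) tt unfolding valid_sys_def by auto
  show ?thesis unfolding tt d(1,2)
    by (rule case_states) (use tau res sys tt d in auto)
qed

end
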